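(* Let $(X_1,x_1)$ and $(X_2,x_2)$ be pointed diffeological spaces. Then there is a natural isomorphism of vector spaces $T_{(x_1,x_2)}(X_1\times X_2)\cong T_{x_1}(X_1)\times T_{x_2}(X_2)$.
   Context: A diffeological space is a set $X$ together with, for every open subset $U$ of every $\mathbb{R}^n$, a set of functions $U\to X$ called plots, such that constant maps are plots, the composite of a plot with a smooth map between open subsets of Euclidean spaces is a plot, and a function which is locally a plot is a plot; smooth maps send plots to plots. $X_1\times X_2$ carries the product diffeology, whose plots are the maps whose components are plots. The internal tangent space $T_x(X)$ is the colimit in the category of real vector spaces of the functor on the category whose objects are plots $p:U\to X$ with $U$ a connected open neighbourhood of $0$ in some $\mathbb{R}^n$ and $p(0)=x$, and whose morphisms $p\to q$ (for $q:V\to X$) are smooth maps $f:U\to V$ with $f(0)=0$ and $q\circ f=p$, sending $p$ to $T_0(U)$ and $f$ to $f_*:T_0(U)\to T_0(V)$. Smooth pointed maps induce linear maps between internal tangent spaces. *)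

theory Defs
  imports "HOL-Analysis.Analysis"
begin

text \<open>R^n is modelled as the set of vectors v :: nat => real vanishing at indices >= n.
  The type nat => real carries the product topology, which on R^n is the Euclidean one.\<close>

type_synonym vec = "nat \<Rightarrow> real"

definition Rn :: "nat \<Rightarrow> vec set" where
  "Rn n = {v. \<forall>i\<ge>n. v i = 0}"

definition origin :: vec where
  "origin = (\<lambda>_. 0)"

definition open_Rn :: "nat \<Rightarrow> vec set \<Rightarrow> bool" where
  "open_Rn n U \<longleftrightarrow> openin (top_of_set (Rn n)) U"

definition pdiff :: "nat \<Rightarrow> (vec \<Rightarrow> real) \<Rightarrow> vec \<Rightarrow> real" where
  "pdiff i g x = deriv (\<lambda>t. g (x(i := x i + t))) 0"

fun dpart :: "nat list \<Rightarrow> (vec \<Rightarrow> real) \<Rightarrow> vec \<Rightarrow> real" where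
  "dpart [] g = g"
| "dpart (i # is) g = pdiff i (dpart is g)"

definition smooth_fun :: "nat \<Rightarrow> vec set \<Rightarrow> (vec \<Rightarrow> real) \<Rightarrow> bool" where
  "smooth_fun n U g \<longleftrightarrow>
     (\<forall>is. set is \<subseteq> {..<n} \<longrightarrow>
        continuous_on U (dpart is g) \<and>
        (\<forall>x\<in>U. \<forall>i<n. (\<lambda>t. dpart is g (x(i := x i + t))) differentiable (at 0)))"

definition smooth_map :: "nat \<Rightarrow> vec set \<Rightarrow> nat \<Rightarrow> (vec \<Rightarrow> vec) \<Rightarrow> bool" where
  "smooth_map n U m f \<longleftrightarrow> f ` U \<subseteq> Rn m \<and> (\<forall>j<m. smooth_fun n U (\<lambda>x. f x j))"

text \<open>A diffeology on a carrier set X is given by the predicate D n U p: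
  "p : U -> X is a plot, U open in R^n".  Plots are only relevant on their domain.\<close>

definition diffeology :: "'a set \<Rightarrow> (nat \<Rightarrow> vec set \<Rightarrow> (vec \<Rightarrow> 'a) \<Rightarrow> bool) \<Rightarrow> bool" where
  "diffeology X D \<longleftrightarrow>
     (\<forall>n U p. D n U p \<longrightarrow> open_Rn n U \<and> p ` U \<subseteq> X)
   \<and> (\<forall>n U p q. open_Rn n U \<and> (\<forall>u\<in>U. p u = q u) \<longrightarrow> (D n U p \<longleftrightarrow> D n U q))
   \<and> (\<forall>n U c. open_Rn n U \<and> c \<in> X \<longrightarrow> D n U (\<lambda>_. c))
   \<and> (\<forall>n V p m U f. D n V p \<and> open_Rn m U \<and> smooth_map m U n f \<and> f ` U \<subseteq> V
        \<longrightarrow> D m U (p \<circ> f))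
   \<and> (\<forall>n U p. open_Rn n U \<and> p ` U \<subseteq> X \<and>
        (\<forall>u\<in>U. \<exists>W. open_Rn n W \<and> u \<in> W \<and> W \<subseteq> U \<and> D n W p) \<longrightarrow> D n U p)"

definition dsmooth ::
  "'a set \<Rightarrow> (nat \<Rightarrow> vec set \<Rightarrow> (vec \<Rightarrow> 'a) \<Rightarrow> bool) \<Rightarrow>
   'b set \<Rightarrow> (nat \<Rightarrow> vec set \<Rightarrow> (vec \<Rightarrow> 'b) \<Rightarrow> bool) \<Rightarrow> ('a \<Rightarrow> 'b) \<Rightarrow> bool" where
  "dsmooth X D Y E g \<longleftrightarrow> g ` X \<subseteq> Y \<and> (\<forall>n U p. D n U p \<longrightarrow> E n U (g \<circ> p))"

definition prod_diffeology ::
  "(nat \<Rightarrow> vec set \<Rightarrow> (vec \<Rightarrow> 'a) \<Rightarrow> bool) \<Rightarrow> (nat \<Rightarrow> vec set \<Rightarrow> (vec \<Rightarrow> 'b) \<Rightarrow> bool) \<Rightarrow>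
   nat \<Rightarrow> vec set \<Rightarrow> (vec \<Rightarrow> 'a \<times> 'b) \<Rightarrow> bool" where
  "prod_diffeology D1 D2 n U p \<longleftrightarrow> open_Rn n U \<and> D1 n U (fst \<circ> p) \<and> D2 n U (snd \<circ> p)"

section \<open>The internal tangent space as a colimit of vector spaces\<close>

type_synonym 'a plotobj = "nat \<times> vec set \<times> (vec \<Rightarrow> 'a)"

text \<open>objects of the indexing category: plots p : U -> X, U connected open nbhd of 0, p(0) = x\<close>
definition pointed_plot :: "(nat \<Rightarrow> vec set \<Rightarrow> (vec \<Rightarrow> 'a) \<Rightarrow> bool) \<Rightarrow> 'a \<Rightarrow> 'a plotobj \<Rightarrow> bool" where
  "pointed_plot D x P \<longleftrightarrow> (case P of (n, U, p) \<Rightarrow>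
      D n U p \<and> connected U \<and> origin \<in> U \<and> p origin = x)"

definition plot_morphism :: "'a plotobj \<Rightarrow> 'a plotobj \<Rightarrow> (vec \<Rightarrow> vec) \<Rightarrow> bool" where
  "plot_morphism P Q f \<longleftrightarrow> (case P of (n, U, p) \<Rightarrow> case Q of (m, V, q) \<Rightarrow>
      smooth_map n U m f \<and> f ` U \<subseteq> V \<and> f origin = origin \<and> (\<forall>u\<in>U. q (f u) = p u))"

definition jac :: "nat \<Rightarrow> nat \<Rightarrow> (vec \<Rightarrow> vec) \<Rightarrow> vec \<Rightarrow> vec" where
  "jac n m f v = (\<lambda>j. if j < m then (\<Sum>i<n. pdiff i (\<lambda>y. f y j) origin * v i) else 0)"

text \<open>direct sum of the T_0(U_P) over all objects P\<close>
definition dsum :: "(nat \<Rightarrow> vec set \<Rightarrow> (vec \<Rightarrow> 'a) \<Rightarrow> bool) \<Rightarrow> 'a \<Rightarrow> ('a plotobj \<Rightarrow> vec) set" where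
  "dsum D x = {\<phi>. finite {P. \<phi> P \<noteq> origin} \<and> (\<forall>P. \<phi> P \<noteq> origin \<longrightarrow> pointed_plot D x P)
                  \<and> (\<forall>P. \<phi> P \<in> Rn (fst P))}"

definition sadd :: "('p \<Rightarrow> vec) \<Rightarrow> ('p \<Rightarrow> vec) \<Rightarrow> ('p \<Rightarrow> vec)" where
  "sadd \<phi> \<psi> = (\<lambda>P j. \<phi> P j + \<psi> P j)"

definition sscale :: "real \<Rightarrow> ('p \<Rightarrow> vec) \<Rightarrow> ('p \<Rightarrow> vec)" where
  "sscale c \<phi> = (\<lambda>P j. c * \<phi> P j)"

definition ins :: "'p \<Rightarrow> vec \<Rightarrow> ('p \<Rightarrow> vec)" where
  "ins P v = (\<lambda>Q. if Q = P then v else origin)"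

inductive_set rel :: "(nat \<Rightarrow> vec set \<Rightarrow> (vec \<Rightarrow> 'a) \<Rightarrow> bool) \<Rightarrow> 'a \<Rightarrow> ('a plotobj \<Rightarrow> vec) set"
  for D :: "nat \<Rightarrow> vec set \<Rightarrow> (vec \<Rightarrow> 'a) \<Rightarrow> bool" and x :: 'a where
  rel_zero: "(\<lambda>_. origin) \<in> rel D x"
| rel_step: "\<lbrakk> r \<in> rel D x; pointed_plot D x P; pointed_plot D x Q; plot_morphism P Q f;
              v \<in> Rn (fst P) \<rbrakk> \<Longrightarrow>
     sadd r (sscale c (sadd (ins P v) (sscale (-1) (ins Q (jac (fst P) (fst Q) f v))))) \<in> rel D x"

definition cls :: "(nat \<Rightarrow> vec set \<Rightarrow> (vec \<Rightarrow> 'a) \<Rightarrow> bool) \<Rightarrow> 'a \<Rightarrow> ('a plotobj \<Rightarrow> vec) \<Rightarrow> ('a plotobj \<Rightarrow> vec) set" where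
  "cls D x \<phi> = {\<psi> \<in> dsum D x. sadd \<phi> (sscale (-1) \<psi>) \<in> rel D x}"

definition tspace :: "(nat \<Rightarrow> vec set \<Rightarrow> (vec \<Rightarrow> 'a) \<Rightarrow> bool) \<Rightarrow> 'a \<Rightarrow> ('a plotobj \<Rightarrow> vec) set set" where
  "tspace D x = cls D x ` dsum D x"

definition tadd :: "(nat \<Rightarrow> vec set \<Rightarrow> (vec \<Rightarrow> 'a) \<Rightarrow> bool) \<Rightarrow> 'a \<Rightarrow>
    ('a plotobj \<Rightarrow> vec) set \<Rightarrow> ('a plotobj \<Rightarrow> vec) set \<Rightarrow> ('a plotobj \<Rightarrow> vec) set" where
  "tadd D x C1 C2 = cls D x (sadd (SOME \<phi>. \<phi> \<in> C1) (SOME \<psi>. \<psi> \<in> C2))"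

definition tscale :: "(nat \<Rightarrow> vec set \<Rightarrow> (vec \<Rightarrow> 'a) \<Rightarrow> bool) \<Rightarrow> 'a \<Rightarrow>
    real \<Rightarrow> ('a plotobj \<Rightarrow> vec) set \<Rightarrow> ('a plotobj \<Rightarrow> vec) set" where
  "tscale D x c C = cls D x (sscale c (SOME \<phi>. \<phi> \<in> C))"

definition push_obj :: "('a \<Rightarrow> 'b) \<Rightarrow> 'a plotobj \<Rightarrow> 'b plotobj" where
  "push_obj g P = (case P of (n, U, p) \<Rightarrow> (n, U, g \<circ> p))"

definition dpush :: "('a \<Rightarrow> 'b) \<Rightarrow> ('a plotobj \<Rightarrow> vec) \<Rightarrow> ('b plotobj \<Rightarrow> vec)" where
  "dpush g \<phi> = (\<lambda>Q j. \<Sum>P\<in>{P. \<phi> P \<noteq> origin \<and> push_obj g P = Q}. \<phi> P j)"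

definition tmap :: "(nat \<Rightarrow> vec set \<Rightarrow> (vec \<Rightarrow> 'b) \<Rightarrow> bool) \<Rightarrow> 'b \<Rightarrow> ('a \<Rightarrow> 'b) \<Rightarrow>
    ('a plotobj \<Rightarrow> vec) set \<Rightarrow> ('b plotobj \<Rightarrow> vec) set" where
  "tmap E y g C = cls E y (dpush g (SOME \<phi>. \<phi> \<in> C))"

definition prod_cmp ::
  "(nat \<Rightarrow> vec set \<Rightarrow> (vec \<Rightarrow> 'a) \<Rightarrow> bool) \<Rightarrow> 'a \<Rightarrow> (nat \<Rightarrow> vec set \<Rightarrow> (vec \<Rightarrow> 'b) \<Rightarrow> bool) \<Rightarrow> 'b \<Rightarrow>
   (('a \<times> 'b) plotobj \<Rightarrow> vec) set \<Rightarrow> (('a plotobj \<Rightarrow> vec) set \<times> ('b plotobj \<Rightarrow> vec) set)" where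
  "prod_cmp D1 x1 D2 x2 C = (tmap D1 x1 fst C, tmap D2 x2 snd C)"

end

theory Submission
  imports Defs
begin


lemma fun2_eqI: "(\<And>P j. \<phi> P j = \<psi> P j) \<Longrightarrow> \<phi> = (\<psi> :: 'p \<Rightarrow> vec)"
  by (simp add: fun_eq_iff)

lemma origin_apply[simp]: "origin i = 0" by (simp add: origin_def)

lemma origin_Rn[simp]: "origin \<in> Rn n" by (simp add: Rn_def)

lemma sadd_apply[simp]: "sadd \<phi> \<psi> P j = \<phi> P j + \<psi> P j" by (simp add: sadd_def)
lemma sscale_apply[simp]: "sscale c \<phi> P j = c * \<phi> P j" by (simp add: sscale_def)
lemma ins_apply: "ins P v Q = (if Q = P then v else origin)" by (simp add: ins_def)

lemma vec_eq_origin: "(v = origin) \<longleftrightarrow> (\<forall>j. v j = 0)"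
  by (auto simp: origin_def)

lemma Rn_add: "u \<in> Rn n \<Longrightarrow> v \<in> Rn n \<Longrightarrow> (\<lambda>j. u j + v j) \<in> Rn n"
  by (simp add: Rn_def)
lemma Rn_scale: "u \<in> Rn n \<Longrightarrow> (\<lambda>j. c * u j) \<in> Rn n"
  by (simp add: Rn_def)

lemma rel_add': "s \<in> rel D x \<Longrightarrow> r \<in> rel D x \<Longrightarrow> sadd r s \<in> rel D x"
proof (induction s rule: rel.induct)
  case rel_zero
  have "sadd r (\<lambda>_. origin) = r" by (rule fun2_eqI) simp
  then show ?case using rel_zero by simp
next
  case (rel_step s P Q f v c)
  have e: "sadd r (sadd s g) = sadd (sadd r s) g" for g :: "'a plotobj \<Rightarrow> vec"
    by (rule fun2_eqI) simp
  have "sadd r s \<in> rel D x" by (rule rel_step.IH[OF rel_step.prems])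
  then have "sadd (sadd r s) (sscale c (sadd (ins P v) (sscale (- 1) (ins Q (jac (fst P) (fst Q) f v))))) \<in> rel D x"
    by (rule rel.rel_step[OF _ rel_step.hyps(2-5)])
  then show ?case unfolding e .
qed

lemma rel_add: "r \<in> rel D x \<Longrightarrow> s \<in> rel D x \<Longrightarrow> sadd r s \<in> rel D x"
  by (rule rel_add')

lemma rel_scale: "r \<in> rel D x \<Longrightarrow> sscale a r \<in> rel D x"
proof (induction r rule: rel.induct)
  case rel_zero
  have e: "sscale a (\<lambda>_. origin) = (\<lambda>_. origin)" by (rule fun2_eqI) simp
  show ?case unfolding e by (rule rel.rel_zero)
next
  case (rel_step s P Q f v c)
  have e: "sscale a (sadd s (sscale c g)) = sadd (sscale a s) (sscale (a*c) g)" for g :: "'a plotobj \<Rightarrow> vec"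
    by (rule fun2_eqI) (simp add: algebra_simps)
  have "sadd (sscale a s) (sscale (a*c) (sadd (ins P v) (sscale (- 1) (ins Q (jac (fst P) (fst Q) f v))))) \<in> rel D x"
    by (rule rel.rel_step[OF rel_step.IH rel_step.hyps(2-5)])
  then show ?case unfolding e .
qed

lemma rel_gen: "pointed_plot D x P \<Longrightarrow> pointed_plot D x Q \<Longrightarrow> plot_morphism P Q f \<Longrightarrow>
   v \<in> Rn (fst P) \<Longrightarrow> sadd (ins P v) (sscale (-1) (ins Q (jac (fst P) (fst Q) f v))) \<in> rel D x"
proof -
  assume a: "pointed_plot D x P" "pointed_plot D x Q" "plot_morphism P Q f" "v \<in> Rn (fst P)"
  have "sadd (\<lambda>_. origin) (sscale 1 g) = g" for g :: "'a plotobj \<Rightarrow> vec"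
    by (rule fun2_eqI) simp
  then show ?thesis using rel_step[OF rel_zero a, of 1] by simp
qed

lemma jac_Rn: "jac n m f v \<in> Rn m" by (simp add: jac_def Rn_def)

lemma ins_dsum: "pointed_plot D x P \<Longrightarrow> v \<in> Rn (fst P) \<Longrightarrow> ins P v \<in> dsum D x"
proof -
  assume a: "pointed_plot D x P" "v \<in> Rn (fst P)"
  have "{Q. ins P v Q \<noteq> origin} \<subseteq> {P}" by (auto simp: ins_apply)
  then have "finite {Q. ins P v Q \<noteq> origin}" by (rule finite_subset) simp
  then show ?thesis using a by (auto simp: dsum_def ins_apply)
qed

lemma dsum_zero: "(\<lambda>_. origin) \<in> dsum D x" by (simp add: dsum_def)

lemma dsum_add: "\<phi> \<in> dsum D x \<Longrightarrow> \<psi> \<in> dsum D x \<Longrightarrow> sadd \<phi> \<psi> \<in> dsum D x"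
proof -
  assume a: "\<phi> \<in> dsum D x" "\<psi> \<in> dsum D x"
  have s: "{P. sadd \<phi> \<psi> P \<noteq> origin} \<subseteq> {P. \<phi> P \<noteq> origin} \<union> {P. \<psi> P \<noteq> origin}"
    by (auto simp: vec_eq_origin)
  have "finite {P. sadd \<phi> \<psi> P \<noteq> origin}"
    using a by (intro finite_subset[OF s]) (auto simp: dsum_def)
  moreover have "\<forall>P. sadd \<phi> \<psi> P \<noteq> origin \<longrightarrow> pointed_plot D x P" using s a by (auto simp: dsum_def)
  moreover have "\<forall>P. sadd \<phi> \<psi> P \<in> Rn (fst P)" using a by (auto simp: dsum_def Rn_def sadd_def)
  ultimately show ?thesis by (simp add: dsum_def)
qed

lemma dsum_scale: "\<phi> \<in> dsum D x \<Longrightarrow> sscale c \<phi> \<in> dsum D x"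
proof -
  assume a: "\<phi> \<in> dsum D x"
  have s: "{P. sscale c \<phi> P \<noteq> origin} \<subseteq> {P. \<phi> P \<noteq> origin}"
    by (auto simp: vec_eq_origin)
  have "finite {P. sscale c \<phi> P \<noteq> origin}"
    using a by (intro finite_subset[OF s]) (auto simp: dsum_def)
  moreover have "\<forall>P. sscale c \<phi> P \<noteq> origin \<longrightarrow> pointed_plot D x P" using s a by (auto simp: dsum_def)
  moreover have "\<forall>P. sscale c \<phi> P \<in> Rn (fst P)" using a by (auto simp: dsum_def Rn_def sscale_def)
  ultimately show ?thesis by (simp add: dsum_def)
qed

lemma rel_dsum: "r \<in> rel D x \<Longrightarrow> r \<in> dsum D x"
proof (induction r rule: rel.induct)
  case rel_zero
  then show ?case by (rule dsum_zero)
next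
  case (rel_step r P Q f v c)
  show ?case
    by (intro dsum_add dsum_scale rel_step ins_dsum jac_Rn)
qed



definition finsupp :: "('p \<Rightarrow> vec) \<Rightarrow> bool" where
  "finsupp \<phi> \<longleftrightarrow> finite {P. \<phi> P \<noteq> origin}"

definition sub :: "('p \<Rightarrow> vec) \<Rightarrow> ('p \<Rightarrow> vec) \<Rightarrow> ('p \<Rightarrow> vec)" where
  "sub \<phi> \<psi> = sadd \<phi> (sscale (-1) \<psi>)"

lemma sub_apply[simp]: "sub \<phi> \<psi> P j = \<phi> P j - \<psi> P j" by (simp add: sub_def)

lemma dsum_finsupp: "\<phi> \<in> dsum D x \<Longrightarrow> finsupp \<phi>" by (simp add: dsum_def finsupp_def)

lemma finsupp_sadd: "finsupp \<phi> \<Longrightarrow> finsupp \<psi> \<Longrightarrow> finsupp (sadd \<phi> \<psi>)"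
  unfolding finsupp_def
  by (rule finite_subset[of _ "{P. \<phi> P \<noteq> origin} \<union> {P. \<psi> P \<noteq> origin}"]) (auto simp: vec_eq_origin)

lemma finsupp_sscale: "finsupp \<phi> \<Longrightarrow> finsupp (sscale c \<phi>)"
  unfolding finsupp_def
  by (rule finite_subset[of _ "{P. \<phi> P \<noteq> origin}"]) (auto simp: vec_eq_origin)

lemma finsupp_ins: "finsupp (ins P v)"
  unfolding finsupp_def
  by (rule finite_subset[of _ "{P}"]) (auto simp: ins_apply)

lemma finsupp_zero: "finsupp (\<lambda>_. origin)" by (simp add: finsupp_def)

lemma dsum_sub: "\<phi> \<in> dsum D x \<Longrightarrow> \<psi> \<in> dsum D x \<Longrightarrow> sub \<phi> \<psi> \<in> dsum D x"
  unfolding sub_def by (intro dsum_add dsum_scale)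

lemma rel_sub: "\<phi> \<in> rel D x \<Longrightarrow> \<psi> \<in> rel D x \<Longrightarrow> sub \<phi> \<psi> \<in> rel D x"
  unfolding sub_def by (intro rel_add rel_scale)

lemma rel_cong: "\<phi> \<in> rel D x \<Longrightarrow> \<phi> = \<psi> \<Longrightarrow> \<psi> \<in> rel D x" by simp

lemma cls_self: "\<phi> \<in> dsum D x \<Longrightarrow> \<phi> \<in> cls D x \<phi>"
proof -
  assume a: "\<phi> \<in> dsum D x"
  have "sadd \<phi> (sscale (-1) \<phi>) = (\<lambda>_. origin)" by (rule fun2_eqI) simp
  then show ?thesis using a rel.rel_zero by (simp add: cls_def)
qed

lemma cls_mem: "\<psi> \<in> cls D x \<phi> \<longleftrightarrow> \<psi> \<in> dsum D x \<and> sub \<phi> \<psi> \<in> rel D x"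
  by (simp add: cls_def sub_def)

lemma cls_eqI: "\<phi> \<in> dsum D x \<Longrightarrow> \<psi> \<in> dsum D x \<Longrightarrow> sub \<phi> \<psi> \<in> rel D x \<Longrightarrow> cls D x \<phi> = cls D x \<psi>"
proof -
  assume a: "\<phi> \<in> dsum D x" "\<psi> \<in> dsum D x" "sub \<phi> \<psi> \<in> rel D x"
  have 1: "sub \<psi> \<xi> \<in> rel D x" if "sub \<phi> \<xi> \<in> rel D x" for \<xi>
    using rel_sub[OF that a(3)] by (rule rel_cong) (rule fun2_eqI, simp)
  have 2: "sub \<phi> \<xi> \<in> rel D x" if "sub \<psi> \<xi> \<in> rel D x" for \<xi>
    using rel_add[OF that a(3)] by (rule rel_cong) (rule fun2_eqI, simp)
  show ?thesis using 1 2 by (auto simp: cls_mem)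
qed

lemma cls_eqD: "\<phi> \<in> dsum D x \<Longrightarrow> \<psi> \<in> dsum D x \<Longrightarrow> cls D x \<phi> = cls D x \<psi> \<Longrightarrow> sub \<phi> \<psi> \<in> rel D x"
proof -
  assume a: "\<phi> \<in> dsum D x" "\<psi> \<in> dsum D x" "cls D x \<phi> = cls D x \<psi>"
  have "\<psi> \<in> cls D x \<phi>" using cls_self[OF a(2)] a(3) by simp
  then show ?thesis by (simp add: cls_mem)
qed

lemma some_cls: "\<phi> \<in> dsum D x \<Longrightarrow> (SOME \<xi>. \<xi> \<in> cls D x \<phi>) \<in> dsum D x \<and> sub \<phi> (SOME \<xi>. \<xi> \<in> cls D x \<phi>) \<in> rel D x"
proof -
  assume "\<phi> \<in> dsum D x"
  then have "\<phi> \<in> cls D x \<phi>" by (rule cls_self)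
  then have "(SOME \<xi>. \<xi> \<in> cls D x \<phi>) \<in> cls D x \<phi>" by (rule someI[of "\<lambda>\<xi>. \<xi> \<in> cls D x \<phi>"])
  then show ?thesis by (simp add: cls_mem)
qed

lemma tadd_cls: "\<phi> \<in> dsum D x \<Longrightarrow> \<psi> \<in> dsum D x \<Longrightarrow> tadd D x (cls D x \<phi>) (cls D x \<psi>) = cls D x (sadd \<phi> \<psi>)"
proof -
  assume a: "\<phi> \<in> dsum D x" "\<psi> \<in> dsum D x"
  define \<phi>0 where "\<phi>0 = (SOME \<xi>. \<xi> \<in> cls D x \<phi>)"
  define \<psi>0 where "\<psi>0 = (SOME \<xi>. \<xi> \<in> cls D x \<psi>)"
  have p: "\<phi>0 \<in> dsum D x" "sub \<phi> \<phi>0 \<in> rel D x" using some_cls[OF a(1)] by (auto simp: \<phi>0_def)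
  have q: "\<psi>0 \<in> dsum D x" "sub \<psi> \<psi>0 \<in> rel D x" using some_cls[OF a(2)] by (auto simp: \<psi>0_def)
  have "sub (sadd \<phi>0 \<psi>0) (sadd \<phi> \<psi>) \<in> rel D x"
    using rel_scale[OF rel_add[OF p(2) q(2)], of "-1"] by (rule rel_cong) (rule fun2_eqI, simp)
  then have "cls D x (sadd \<phi>0 \<psi>0) = cls D x (sadd \<phi> \<psi>)"
    by (intro cls_eqI dsum_add p q a)
  then show ?thesis by (simp add: tadd_def \<phi>0_def \<psi>0_def)
qed

lemma tscale_cls: "\<phi> \<in> dsum D x \<Longrightarrow> tscale D x c (cls D x \<phi>) = cls D x (sscale c \<phi>)"
proof -
  assume a: "\<phi> \<in> dsum D x"
  define \<phi>0 where "\<phi>0 = (SOME \<xi>. \<xi> \<in> cls D x \<phi>)"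
  have p: "\<phi>0 \<in> dsum D x" "sub \<phi> \<phi>0 \<in> rel D x" using some_cls[OF a(1)] by (auto simp: \<phi>0_def)
  have "sub (sscale c \<phi>0) (sscale c \<phi>) \<in> rel D x"
    using rel_scale[OF p(2), of "-c"] by (rule rel_cong) (rule fun2_eqI, simp add: algebra_simps)
  then have "cls D x (sscale c \<phi>0) = cls D x (sscale c \<phi>)"
    by (intro cls_eqI dsum_scale p a)
  then show ?thesis by (simp add: tscale_def \<phi>0_def)
qed

lemma dsum_induct:
  assumes "\<phi> \<in> dsum D x" and z: "Pr (\<lambda>_. origin)"
    and st: "\<And>\<psi> P v. \<psi> \<in> dsum D x \<Longrightarrow> Pr \<psi> \<Longrightarrow> pointed_plot D x P \<Longrightarrow> v \<in> Rn (fst P) \<Longrightarrow> Pr (sadd (ins P v) \<psi>)"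
  shows "Pr \<phi>"
proof -
  have "finite {P. \<phi> P \<noteq> origin}" using assms(1) by (simp add: dsum_def)
  moreover have "\<forall>\<phi>. \<phi> \<in> dsum D x \<and> {P. \<phi> P \<noteq> origin} \<subseteq> S \<longrightarrow> Pr \<phi>" if "finite S" for S
    using that
  proof (induction S rule: finite_induct)
    case empty
    show ?case
    proof (intro allI impI)
      fix \<phi> :: "'a plotobj \<Rightarrow> vec" assume h: "\<phi> \<in> dsum D x \<and> {P. \<phi> P \<noteq> origin} \<subseteq> {}"
      have "\<phi> = (\<lambda>_. origin)" by (rule ext) (use h in blast)
      then show "Pr \<phi>" using z by simp
    qed
  next
    case (insert P S)
    show ?case
    proof (intro allI impI)
      fix \<phi> assume h: "\<phi> \<in> dsum D x \<and> {P. \<phi> P \<noteq> origin} \<subseteq> insert P S"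
      show "Pr \<phi>"
      proof (cases "\<phi> P = origin")
        case True
        then have "{P. \<phi> P \<noteq> origin} \<subseteq> S" using h by auto
        then show ?thesis using insert.IH h by blast
      next
        case False
        define \<psi> where "\<psi> = \<phi>(P := origin)"
        have "{P. \<psi> P \<noteq> origin} \<subseteq> S" using h by (auto simp: \<psi>_def)
        moreover have "\<psi> \<in> dsum D x" using h
          unfolding dsum_def \<psi>_def
          by (auto intro: finite_subset[of _ "{P. \<phi> P \<noteq> origin}"])
        ultimately have "Pr \<psi>" using insert.IH by blast
        moreover have "pointed_plot D x P" "\<phi> P \<in> Rn (fst P)" using h False unfolding dsum_def by blast+
        moreover have "sadd (ins P (\<phi> P)) \<psi> = \<phi>"
          by (rule fun2_eqI) (simp add: \<psi>_def ins_apply)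
        ultimately show ?thesis using st[of \<psi> P "\<phi> P"] \<open>\<psi> \<in> dsum D x\<close> by (simp add: origin_def)
      qed
    qed
  qed
  ultimately show ?thesis using assms(1) by blast
qed

section \<open>pushforward\<close>

lemma fst_push[simp]: "fst (push_obj g P) = fst P"
  by (cases P) (simp add: push_obj_def)

lemma push_push: "push_obj g (push_obj h P) = push_obj (g \<circ> h) P"
  by (cases P) (simp add: push_obj_def comp_assoc)

lemma push_id: "push_obj (\<lambda>a. a) P = P"
  by (cases P) (simp add: push_obj_def comp_def)

lemma dpush_eq:
  assumes "finite S" "{P. \<phi> P \<noteq> origin} \<subseteq> S"
  shows "dpush g \<phi> Q j = (\<Sum>P\<in>{P\<in>S. push_obj g P = Q}. \<phi> P j)"
  unfolding dpush_def
  by (rule sum.mono_neutral_left) (use assms in \<open>auto simp: vec_eq_origin\<close>)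

lemma dpush_sadd: "finsupp \<phi> \<Longrightarrow> finsupp \<psi> \<Longrightarrow> dpush g (sadd \<phi> \<psi>) = sadd (dpush g \<phi>) (dpush g \<psi>)"
proof (rule fun2_eqI)
  fix Q j assume a: "finsupp \<phi>" "finsupp \<psi>"
  let ?S = "{P. \<phi> P \<noteq> origin} \<union> {P. \<psi> P \<noteq> origin}"
  have f: "finite ?S" using a by (simp add: finsupp_def)
  have "dpush g (sadd \<phi> \<psi>) Q j = (\<Sum>P\<in>{P\<in>?S. push_obj g P = Q}. sadd \<phi> \<psi> P j)"
    by (rule dpush_eq[OF f]) (auto simp: vec_eq_origin)
  also have "\<dots> = (\<Sum>P\<in>{P\<in>?S. push_obj g P = Q}. \<phi> P j) + (\<Sum>P\<in>{P\<in>?S. push_obj g P = Q}. \<psi> P j)"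
    by (simp add: sum.distrib)
  also have "\<dots> = dpush g \<phi> Q j + dpush g \<psi> Q j"
    by (simp add: dpush_eq[OF f])
  finally show "dpush g (sadd \<phi> \<psi>) Q j = sadd (dpush g \<phi>) (dpush g \<psi>) Q j" by simp
qed

lemma dpush_sscale: "finsupp \<phi> \<Longrightarrow> dpush g (sscale c \<phi>) = sscale c (dpush g \<phi>)"
proof (rule fun2_eqI)
  fix Q j assume a: "finsupp \<phi>"
  let ?S = "{P. \<phi> P \<noteq> origin}"
  have f: "finite ?S" using a by (simp add: finsupp_def)
  have "dpush g (sscale c \<phi>) Q j = (\<Sum>P\<in>{P\<in>?S. push_obj g P = Q}. sscale c \<phi> P j)"
    by (rule dpush_eq[OF f]) (auto simp: vec_eq_origin)
  also have "\<dots> = c * (\<Sum>P\<in>{P\<in>?S. push_obj g P = Q}. \<phi> P j)"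
    by (simp add: sum_distrib_left)
  also have "\<dots> = c * dpush g \<phi> Q j"
    by (simp add: dpush_eq[OF f])
  finally show "dpush g (sscale c \<phi>) Q j = sscale c (dpush g \<phi>) Q j" by simp
qed

lemma dpush_sub: "finsupp \<phi> \<Longrightarrow> finsupp \<psi> \<Longrightarrow> dpush g (sub \<phi> \<psi>) = sub (dpush g \<phi>) (dpush g \<psi>)"
  unfolding sub_def by (simp add: dpush_sadd dpush_sscale finsupp_sscale)

lemma dpush_ins: "dpush g (ins P v) = ins (push_obj g P) v"
proof (rule fun2_eqI)
  fix Q j
  have "dpush g (ins P v) Q j = (\<Sum>P'\<in>{P'\<in>{P}. push_obj g P' = Q}. ins P v P' j)"
    by (rule dpush_eq) (auto simp: ins_apply)
  also have "\<dots> = ins (push_obj g P) v Q j"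
  proof -
    have e: "{P'\<in>{P}. push_obj g P' = Q} = (if push_obj g P = Q then {P} else {})" by auto
    show ?thesis unfolding e by (simp add: ins_apply)
  qed
  finally show "dpush g (ins P v) Q j = ins (push_obj g P) v Q j" .
qed

lemma dpush_zero: "dpush g (\<lambda>_. origin) = (\<lambda>_. origin)"
  by (rule fun2_eqI) (simp add: dpush_def)

lemma dpush_supp:
  assumes "finite S" "{P. \<phi> P \<noteq> origin} \<subseteq> S"
  shows "{Q. dpush g \<phi> Q \<noteq> origin} \<subseteq> push_obj g ` S"
proof
  fix Q assume "Q \<in> {Q. dpush g \<phi> Q \<noteq> origin}"
  then obtain j where j: "dpush g \<phi> Q j \<noteq> 0" by (auto simp: vec_eq_origin)
  show "Q \<in> push_obj g ` S"
  proof (rule ccontr)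
    assume "Q \<notin> push_obj g ` S"
    then have e: "{P\<in>S. push_obj g P = Q} = {}" by auto
    have "dpush g \<phi> Q j = (\<Sum>P\<in>{}. \<phi> P j)" using dpush_eq[OF assms, of g Q j] unfolding e .
    then show False using j by simp
  qed
qed

lemma finsupp_dpush: "finsupp \<phi> \<Longrightarrow> finsupp (dpush g \<phi>)"
  unfolding finsupp_def
  by (rule finite_subset[OF dpush_supp[of "{P. \<phi> P \<noteq> origin}"]]) auto

lemma dpush_comp:
  assumes "finsupp \<phi>"
  shows "dpush g (dpush h \<phi>) = dpush (g \<circ> h) \<phi>"
proof (rule fun2_eqI)
  fix Q j
  let ?S = "{P. \<phi> P \<noteq> origin}"
  have f: "finite ?S" using assms by (simp add: finsupp_def)
  let ?T = "push_obj h ` ?S"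
  have fT: "finite ?T" using f by simp
  have "dpush g (dpush h \<phi>) Q j = (\<Sum>R\<in>{R\<in>?T. push_obj g R = Q}. dpush h \<phi> R j)"
    by (rule dpush_eq[OF fT dpush_supp[OF f]]) simp
  also have "\<dots> = (\<Sum>R\<in>{R\<in>?T. push_obj g R = Q}. \<Sum>P\<in>{P\<in>?S. push_obj h P = R}. \<phi> P j)"
    by (simp add: dpush_eq[OF f])
  also have "\<dots> = (\<Sum>R\<in>{R\<in>?T. push_obj g R = Q}. \<Sum>P\<in>{P\<in>{P\<in>?S. push_obj (g \<circ> h) P = Q}. push_obj h P = R}. \<phi> P j)"
  proof (rule sum.cong[OF refl])
    fix R assume R: "R \<in> {R\<in>?T. push_obj g R = Q}"
    have "{P\<in>?S. push_obj h P = R} = {P\<in>{P\<in>?S. push_obj (g \<circ> h) P = Q}. push_obj h P = R}"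
      using R by (auto simp: push_push[symmetric])
    then show "(\<Sum>P\<in>{P\<in>?S. push_obj h P = R}. \<phi> P j) = (\<Sum>P\<in>{P\<in>{P\<in>?S. push_obj (g \<circ> h) P = Q}. push_obj h P = R}. \<phi> P j)"
      by simp
  qed
  also have "\<dots> = (\<Sum>P\<in>{P\<in>?S. push_obj (g \<circ> h) P = Q}. \<phi> P j)"
    by (rule sum.group) (use f in \<open>auto simp: push_push[symmetric]\<close>)
  also have "\<dots> = dpush (g \<circ> h) \<phi> Q j" by (simp add: dpush_eq[OF f])
  finally show "dpush g (dpush h \<phi>) Q j = dpush (g \<circ> h) \<phi> Q j" .
qed

lemma dpush_id: "finsupp \<phi> \<Longrightarrow> dpush (\<lambda>a. a) \<phi> = \<phi>"
proof (rule fun2_eqI)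
  fix Q j assume a: "finsupp \<phi>"
  let ?S = "{P. \<phi> P \<noteq> origin}"
  have f: "finite ?S" using a by (simp add: finsupp_def)
  have "dpush (\<lambda>a. a) \<phi> Q j = (\<Sum>P\<in>{P\<in>?S. push_obj (\<lambda>a. a) P = Q}. \<phi> P j)"
    by (rule dpush_eq[OF f]) simp
  also have "\<dots> = \<phi> Q j"
  proof -
    have e: "{P\<in>?S. push_obj (\<lambda>a. a) P = Q} = (if \<phi> Q = origin then {} else {Q})" by (auto simp: push_id)
    show ?thesis unfolding e by (auto simp: vec_eq_origin)
  qed
  finally show "dpush (\<lambda>a. a) \<phi> Q j = \<phi> Q j" .
qed

lemma dpush_dsum:
  assumes hpt: "\<And>P. pointed_plot D x P \<Longrightarrow> pointed_plot E y (push_obj g P)"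
    and "\<phi> \<in> dsum D x"
  shows "dpush g \<phi> \<in> dsum E y"
proof -
  let ?S = "{P. \<phi> P \<noteq> origin}"
  have f: "finite ?S" using assms by (simp add: dsum_def)
  have s: "{Q. dpush g \<phi> Q \<noteq> origin} \<subseteq> push_obj g ` ?S" by (rule dpush_supp[OF f]) simp
  have 1: "finite {Q. dpush g \<phi> Q \<noteq> origin}" using s f by (auto intro: finite_subset)
  have 2: "pointed_plot E y Q" if "dpush g \<phi> Q \<noteq> origin" for Q
    using s that assms by (auto simp: dsum_def)
  have 3: "dpush g \<phi> Q \<in> Rn (fst Q)" for Q
  proof -
    have "dpush g \<phi> Q j = 0" if "j \<ge> fst Q" for j
    proof -
      have "dpush g \<phi> Q j = (\<Sum>P\<in>{P\<in>?S. push_obj g P = Q}. \<phi> P j)" by (rule dpush_eq[OF f]) simp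
      also have "\<dots> = 0"
      proof (rule sum.neutral, rule ballI)
        fix P assume "P \<in> {P\<in>?S. push_obj g P = Q}"
        then have "fst P = fst Q" by auto
        moreover have "\<phi> P \<in> Rn (fst P)" using assms(2) unfolding dsum_def by blast
        ultimately show "\<phi> P j = 0" using that by (simp add: Rn_def)
      qed
      finally show ?thesis .
    qed
    then show ?thesis by (simp add: Rn_def)
  qed
  show ?thesis using 1 2 3 unfolding dsum_def by blast
qed

lemma plot_morphism_push: "plot_morphism P Q f \<Longrightarrow> plot_morphism (push_obj g P) (push_obj g Q) f"
  by (cases P; cases Q) (auto simp: plot_morphism_def push_obj_def)

lemma dpush_rel:
  assumes hpt: "\<And>P. pointed_plot D x P \<Longrightarrow> pointed_plot E y (push_obj g P)"
  shows "r \<in> rel D x \<Longrightarrow> dpush g r \<in> rel E y"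
proof (induction r rule: rel.induct)
  case rel_zero
  show ?case unfolding dpush_zero by (rule rel.rel_zero)
next
  case (rel_step r P Q f v c)
  have fr: "finsupp r" by (rule dsum_finsupp[OF rel_dsum[OF rel_step.hyps(1)]])
  have e: "dpush g (sadd r (sscale c (sadd (ins P v) (sscale (- 1) (ins Q (jac (fst P) (fst Q) f v))))))
     = sadd (dpush g r) (sscale c (sadd (ins (push_obj g P) v) (sscale (- 1) (ins (push_obj g Q) (jac (fst (push_obj g P)) (fst (push_obj g Q)) f v)))))"
    by (simp add: dpush_sadd dpush_sscale dpush_ins fr finsupp_sadd finsupp_sscale finsupp_ins)
  show ?case unfolding e
    by (rule rel.rel_step[OF rel_step.IH hpt[OF rel_step.hyps(2)] hpt[OF rel_step.hyps(3)]
          plot_morphism_push[OF rel_step.hyps(4)]]) (use rel_step.hyps(5) in simp)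
qed

lemma tmap_cls:
  assumes hpt: "\<And>P. pointed_plot D x P \<Longrightarrow> pointed_plot E y (push_obj g P)"
    and a: "\<phi> \<in> dsum D x"
  shows "tmap E y g (cls D x \<phi>) = cls E y (dpush g \<phi>)"
proof -
  define \<phi>0 where "\<phi>0 = (SOME \<xi>. \<xi> \<in> cls D x \<phi>)"
  have p: "\<phi>0 \<in> dsum D x" "sub \<phi> \<phi>0 \<in> rel D x" using some_cls[OF a] by (auto simp: \<phi>0_def)
  have "sub \<phi>0 \<phi> \<in> rel D x"
    using rel_scale[OF p(2), of "-1"] by (rule rel_cong) (rule fun2_eqI, simp)
  then have "dpush g (sub \<phi>0 \<phi>) \<in> rel E y" using dpush_rel[OF hpt] by blast
  then have r: "sub (dpush g \<phi>0) (dpush g \<phi>) \<in> rel E y"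
    by (simp add: dpush_sub dsum_finsupp[OF p(1)] dsum_finsupp[OF a])
  have d1: "dpush g \<phi>0 \<in> dsum E y" by (rule dpush_dsum[OF hpt p(1)])
  have d2: "dpush g \<phi> \<in> dsum E y" by (rule dpush_dsum[OF hpt a])
  from r have "cls E y (dpush g \<phi>0) = cls E y (dpush g \<phi>)"
    using cls_eqI[OF d1 d2] by blast
  then show ?thesis by (simp add: tmap_def \<phi>0_def)
qed



definition sel :: "(nat \<Rightarrow> bool) \<Rightarrow> (nat \<Rightarrow> nat) \<Rightarrow> vec \<Rightarrow> vec" where
  "sel A \<sigma> y = (\<lambda>j. if A j then y (\<sigma> j) else 0)"

lemma sel_apply: "sel A \<sigma> y j = (if A j then y (\<sigma> j) else 0)" by (simp add: sel_def)

lemma pdiff_coord: "pdiff i (\<lambda>y. y k) = (\<lambda>x. if i = k then 1 else 0)"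
proof
  fix x :: vec
  show "pdiff i (\<lambda>y. y k) x = (if i = k then 1 else 0)"
  proof (cases "i = k")
    case True
    then have "(\<lambda>t. (x(i := x i + t)) k) = (\<lambda>t. x k + t)" by auto
    moreover have "deriv (\<lambda>t. x k + t) 0 = 1"
      by (rule DERIV_imp_deriv) (auto intro!: derivative_eq_intros)
    ultimately show ?thesis using True by (simp add: pdiff_def)
  next
    case False
    then have "(\<lambda>t. (x(i := x i + t)) k) = (\<lambda>t. x k)" by auto
    moreover have "deriv (\<lambda>t::real. x k) 0 = 0"
      by (rule DERIV_imp_deriv) (auto intro!: derivative_eq_intros)
    ultimately show ?thesis using False by (simp add: pdiff_def)
  qed
qed

lemma pdiff_const: "pdiff i (\<lambda>y. c) = (\<lambda>x. 0)"
proof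
  fix x :: vec
  have "deriv (\<lambda>t::real. c) 0 = 0"
    by (rule DERIV_imp_deriv) (auto intro!: derivative_eq_intros)
  then show "pdiff i (\<lambda>y. c) x = 0" by (simp add: pdiff_def)
qed

lemma dpart_const: "dpart ks (\<lambda>y. c) = (\<lambda>y. if ks = [] then c else 0)"
  by (induction ks) (auto simp: pdiff_const)

lemma dpart_coord: "dpart ks (\<lambda>y. y k) = (\<lambda>y. y k) \<or> (\<exists>c. dpart ks (\<lambda>y. y k) = (\<lambda>y. c))"
proof (induction ks)
  case Nil
  then show ?case by simp
next
  case (Cons i ks)
  then show ?case
  proof
    assume "dpart ks (\<lambda>y. y k) = (\<lambda>y. y k)"
    then show ?thesis by (auto simp: pdiff_coord)
  next
    assume "\<exists>c. dpart ks (\<lambda>y. y k) = (\<lambda>y. c)"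
    then show ?thesis by (auto simp: pdiff_const)
  qed
qed

lemma line_differentiable_coord: "(\<lambda>t. (x(i := x i + t)) k) differentiable (at (0::real))"
proof (cases "i = k")
  case True
  then have "(\<lambda>t. (x(i := x i + t)) k) = (\<lambda>t. x k + t)" by auto
  then show ?thesis by (auto intro!: derivative_intros)
next
  case False
  then have "(\<lambda>t. (x(i := x i + t)) k) = (\<lambda>t. x k)" by auto
  then show ?thesis by (auto intro!: derivative_intros)
qed

lemma smooth_fun_const: "smooth_fun n U (\<lambda>y. c)"
  unfolding smooth_fun_def dpart_const by (auto intro!: derivative_intros continuous_intros)

lemma smooth_fun_coord: "smooth_fun n U (\<lambda>y. y k)"
  unfolding smooth_fun_def
proof (intro allI impI conjI ballI)
  fix ks :: "nat list"
  show "continuous_on U (dpart ks (\<lambda>y. y k))"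
    using dpart_coord[of ks k]
  proof
    assume "dpart ks (\<lambda>y. y k) = (\<lambda>y. y k)"
    then show ?thesis using continuous_on_subset[OF continuous_on_product_coordinates[of k]] by auto
  next
    assume "\<exists>c. dpart ks (\<lambda>y. y k) = (\<lambda>y. c)"
    then show ?thesis by (auto intro: continuous_intros)
  qed
  fix x i assume "x \<in> U" "i < n"
  show "(\<lambda>t. dpart ks (\<lambda>y. y k) (x(i := x i + t))) differentiable at 0"
    using dpart_coord[of ks k]
  proof
    assume "dpart ks (\<lambda>y. y k) = (\<lambda>y. y k)"
    then show ?thesis using line_differentiable_coord by auto
  next
    assume "\<exists>c. dpart ks (\<lambda>y. y k) = (\<lambda>y. c)"
    then show ?thesis by (auto intro!: derivative_intros)
  qed
qed

lemma smooth_sel: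
  assumes "\<And>j. A j \<Longrightarrow> j < m"
  shows "smooth_map n U m (sel A \<sigma>)"
  unfolding smooth_map_def
proof (intro conjI allI impI)
  have "sel A \<sigma> y i = 0" if "m \<le> i" for y i using assms[of i] that by (auto simp: sel_apply)
  then show "sel A \<sigma> ` U \<subseteq> Rn m" by (auto simp: Rn_def)
  fix j assume "j < m"
  show "smooth_fun n U (\<lambda>x. sel A \<sigma> x j)"
  proof (cases "A j")
    case True
    then show ?thesis using smooth_fun_coord[of n U "\<sigma> j"] by (simp add: sel_apply)
  next
    case False
    then show ?thesis using smooth_fun_const[of n U 0] by (simp add: sel_apply)
  qed
qed

lemma jac_sel: "jac n m (sel A \<sigma>) v = (\<lambda>j. if j < m \<and> A j \<and> \<sigma> j < n then v (\<sigma> j) else 0)"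
proof
  fix j
  show "jac n m (sel A \<sigma>) v j = (if j < m \<and> A j \<and> \<sigma> j < n then v (\<sigma> j) else 0)"
  proof (cases "A j")
    case True
    then have "(\<lambda>y. sel A \<sigma> y j) = (\<lambda>y. y (\<sigma> j))" by (simp add: sel_apply)
    then have "(\<Sum>i<n. pdiff i (\<lambda>y. sel A \<sigma> y j) origin * v i) = (\<Sum>i<n. if i = \<sigma> j then v i else 0)"
      unfolding \<open>(\<lambda>y. sel A \<sigma> y j) = (\<lambda>y. y (\<sigma> j))\<close> by (intro sum.cong) (auto simp: pdiff_coord)
    also have "\<dots> = (if \<sigma> j < n then v (\<sigma> j) else 0)" by simp
    finally show ?thesis using True by (simp add: jac_def)
  next
    case False
    then have "(\<lambda>y. sel A \<sigma> y j) = (\<lambda>y. 0)" by (simp add: sel_apply)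
    then show ?thesis using False by (simp add: jac_def pdiff_const)
  qed
qed

lemma continuous_sel: "continuous_on S (sel A \<sigma>)"
proof (rule continuous_on_coordinatewise_then_product)
  fix j
  show "continuous_on S (\<lambda>x. sel A \<sigma> x j)"
  proof (cases "A j")
    case True
    then show ?thesis using continuous_on_subset[OF continuous_on_product_coordinates[of "\<sigma> j"]]
      by (simp add: sel_apply)
  next
    case False
    then show ?thesis by (simp add: sel_apply continuous_intros)
  qed
qed

section \<open>constant plots have zero tangent vectors\<close>

lemma diffeology_D: assumes "diffeology X D" "D n U p" shows "open_Rn n U \<and> p ` U \<subseteq> X"
proof -
  have h: "\<forall>n U p. D n U p \<longrightarrow> open_Rn n U \<and> p ` U \<subseteq> X"
    using assms(1) unfolding diffeology_def by (elim conjE) assumption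
  show ?thesis using h assms(2) by blast
qed

lemma diffeology_const: assumes "diffeology X D" "open_Rn n U" "c \<in> X" shows "D n U (\<lambda>_. c)"
proof -
  have h: "\<forall>n U c. open_Rn n U \<and> c \<in> X \<longrightarrow> D n U (\<lambda>_. c)"
    using assms(1) unfolding diffeology_def by (elim conjE) assumption
  show ?thesis using h assms(2,3) by blast
qed

lemma diffeology_comp: assumes "diffeology X D" "D n V p" "open_Rn m U" "smooth_map m U n f" "f ` U \<subseteq> V"
  shows "D m U (p \<circ> f)"
proof -
  have h: "\<forall>n V p m U f. D n V p \<and> open_Rn m U \<and> smooth_map m U n f \<and> f ` U \<subseteq> V
        \<longrightarrow> D m U (p \<circ> f)"
    using assms(1) unfolding diffeology_def by (elim conjE) assumption
  show ?thesis using h assms(2-5) by blast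
qed

lemma Rn0: "Rn 0 = {origin}" by (auto simp: Rn_def origin_def)

lemma open_Rn0: "open_Rn 0 {origin}"
  unfolding open_Rn_def Rn0[symmetric] using openin_topspace[of "top_of_set (Rn 0)"] by simp

lemma rel_const:
  assumes "diffeology X D" "y \<in> X" "pointed_plot D y P" "snd (snd P) = (\<lambda>_. y)" "v \<in> Rn (fst P)"
  shows "ins P v \<in> rel D y"
proof -
  obtain n U p where P: "P = (n, U, p)" by (cases P) auto
  let ?Q = "(0::nat, {origin}, (\<lambda>_. y))"
  have Q: "pointed_plot D y ?Q"
    using diffeology_const[OF assms(1) open_Rn0 assms(2)] by (simp add: pointed_plot_def)
  have m: "plot_morphism P ?Q (\<lambda>_. origin)"
    using assms(3,4) by (auto simp: plot_morphism_def smooth_map_def P Rn0 pointed_plot_def)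
  have j: "jac (fst P) (fst ?Q) (\<lambda>_. origin) v = origin" by (simp add: jac_def origin_def)
  have e: "ins ?Q origin = (\<lambda>_. origin)" by (simp add: ins_def fun_eq_iff)
  have "sadd (ins P v) (sscale (-1) (ins ?Q (jac (fst P) (fst ?Q) (\<lambda>_. origin) v))) \<in> rel D y"
    using rel_gen[OF assms(3) Q m assms(5)] by simp
  moreover have "sadd (ins P v) (sscale (-1) (ins ?Q (jac (fst P) (fst ?Q) (\<lambda>_. origin) v))) = ins P v"
    unfolding j e by (rule fun2_eqI) simp
  ultimately show ?thesis by simp
qed

lemma dsum_induct_K:
  assumes "\<phi> \<in> dsum D x" "\<And>P. \<phi> P \<noteq> origin \<Longrightarrow> K P" and z: "Pr (\<lambda>_. origin)"
    and st: "\<And>\<psi> P v. \<psi> \<in> dsum D x \<Longrightarrow> Pr \<psi> \<Longrightarrow> pointed_plot D x P \<Longrightarrow> v \<in> Rn (fst P) \<Longrightarrow> K P \<Longrightarrow> Pr (sadd (ins P v) \<psi>)"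
  shows "Pr \<phi>"
proof -
  have "finite {P. \<phi> P \<noteq> origin}" using assms(1) by (simp add: dsum_def)
  moreover have "\<forall>\<phi>. \<phi> \<in> dsum D x \<and> {P. \<phi> P \<noteq> origin} \<subseteq> S \<and> (\<forall>P. \<phi> P \<noteq> origin \<longrightarrow> K P) \<longrightarrow> Pr \<phi>" if "finite S" for S
    using that
  proof (induction S rule: finite_induct)
    case empty
    show ?case
    proof (intro allI impI)
      fix \<phi> :: "'a plotobj \<Rightarrow> vec" assume h: "\<phi> \<in> dsum D x \<and> {P. \<phi> P \<noteq> origin} \<subseteq> {} \<and> (\<forall>P. \<phi> P \<noteq> origin \<longrightarrow> K P)"
      have "\<phi> = (\<lambda>_. origin)" by (rule ext) (use h in blast)
      then show "Pr \<phi>" using z by simp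
    qed
  next
    case (insert P S)
    show ?case
    proof (intro allI impI)
      fix \<phi> assume h: "\<phi> \<in> dsum D x \<and> {P. \<phi> P \<noteq> origin} \<subseteq> insert P S \<and> (\<forall>P. \<phi> P \<noteq> origin \<longrightarrow> K P)"
      show "Pr \<phi>"
      proof (cases "\<phi> P = origin")
        case True
        then have "{P. \<phi> P \<noteq> origin} \<subseteq> S" using h by auto
        then show ?thesis using insert.IH h by blast
      next
        case False
        define \<psi> where "\<psi> = \<phi>(P := origin)"
        have "{P. \<psi> P \<noteq> origin} \<subseteq> S" using h by (auto simp: \<psi>_def)
        moreover have "\<psi> \<in> dsum D x" using h
          unfolding dsum_def \<psi>_def
          by (auto intro: finite_subset[of _ "{P. \<phi> P \<noteq> origin}"])
        moreover have "\<forall>Q. \<psi> Q \<noteq> origin \<longrightarrow> K Q" using h by (auto simp: \<psi>_def)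
        ultimately have "Pr \<psi>" using insert.IH by blast
        moreover have "pointed_plot D x P" "\<phi> P \<in> Rn (fst P)" using h False unfolding dsum_def by blast+
        moreover have "K P" using h False by blast
        moreover have "sadd (ins P (\<phi> P)) \<psi> = \<phi>"
          by (rule fun2_eqI) (simp add: \<psi>_def ins_apply)
        ultimately show ?thesis using st[of \<psi> P "\<phi> P"] \<open>\<psi> \<in> dsum D x\<close> by (simp add: origin_def)
      qed
    qed
  qed
  ultimately show ?thesis using assms(1,2) by blast
qed

lemma rel_const_all:
  assumes "diffeology X D" "y \<in> X" "\<phi> \<in> dsum D y" "\<And>P. \<phi> P \<noteq> origin \<Longrightarrow> snd (snd P) = (\<lambda>_. y)"
  shows "\<phi> \<in> rel D y"
proof (rule dsum_induct_K[OF assms(3), where K = "\<lambda>P. snd (snd P) = (\<lambda>_. y)" and Pr = "\<lambda>\<psi>. \<psi> \<in> rel D y"])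
  show "\<And>P. \<phi> P \<noteq> origin \<Longrightarrow> snd (snd P) = (\<lambda>_. y)" by (rule assms(4))
  show "(\<lambda>_. origin) \<in> rel D y" by (rule rel.rel_zero)
  fix \<psi> P v assume h: "\<psi> \<in> dsum D y" "\<psi> \<in> rel D y" "pointed_plot D y P" "v \<in> Rn (fst P)" "snd (snd P) = (\<lambda>_. y)"
  show "sadd (ins P v) \<psi> \<in> rel D y" by (rule rel_add[OF rel_const[OF assms(1,2) h(3,5,4)] h(2)])
qed



lemma pointed_prod_iff:
  "pointed_plot (prod_diffeology D1 D2) (x1, x2) (n, U, p) \<longleftrightarrow>
     open_Rn n U \<and> D1 n U (fst \<circ> p) \<and> D2 n U (snd \<circ> p) \<and> connected U \<and> origin \<in> U \<and> p origin = (x1, x2)"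
  by (auto simp: pointed_plot_def prod_diffeology_def)

lemma hpt_fst: "pointed_plot (prod_diffeology D1 D2) (x1, x2) P \<Longrightarrow> pointed_plot D1 x1 (push_obj fst P)"
  by (cases P) (auto simp: pointed_plot_def prod_diffeology_def push_obj_def)

lemma hpt_snd: "pointed_plot (prod_diffeology D1 D2) (x1, x2) P \<Longrightarrow> pointed_plot D2 x2 (push_obj snd P)"
  by (cases P) (auto simp: pointed_plot_def prod_diffeology_def push_obj_def)

lemma hpt_J1:
  assumes "diffeology X1 D1" "diffeology X2 D2" "x2 \<in> X2" "pointed_plot D1 x1 P"
  shows "pointed_plot (prod_diffeology D1 D2) (x1, x2) (push_obj (\<lambda>a. (a, x2)) P)"
proof -
  obtain n U p where P: "P = (n, U, p)" by (cases P) auto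
  have h: "D1 n U p" "connected U" "origin \<in> U" "p origin = x1" using assms(4) by (auto simp: P pointed_plot_def)
  have o: "open_Rn n U" using diffeology_D[OF assms(1) h(1)] by blast
  have c: "D2 n U (\<lambda>_. x2)" by (rule diffeology_const[OF assms(2) o assms(3)])
  have e1: "fst \<circ> ((\<lambda>a. (a, x2)) \<circ> p) = p" and e2: "snd \<circ> ((\<lambda>a. (a, x2)) \<circ> p) = (\<lambda>_. x2)" by auto
  show ?thesis unfolding P push_obj_def using h o c by (simp add: pointed_prod_iff e1 e2)
qed

lemma hpt_J2:
  assumes "diffeology X1 D1" "diffeology X2 D2" "x1 \<in> X1" "pointed_plot D2 x2 P"
  shows "pointed_plot (prod_diffeology D1 D2) (x1, x2) (push_obj (\<lambda>b. (x1, b)) P)"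
proof -
  obtain n U p where P: "P = (n, U, p)" by (cases P) auto
  have h: "D2 n U p" "connected U" "origin \<in> U" "p origin = x2" using assms(4) by (auto simp: P pointed_plot_def)
  have o: "open_Rn n U" using diffeology_D[OF assms(2) h(1)] by blast
  have c: "D1 n U (\<lambda>_. x1)" by (rule diffeology_const[OF assms(1) o assms(3)])
  have e1: "fst \<circ> ((\<lambda>b. (x1, b)) \<circ> p) = (\<lambda>_. x1)" and e2: "snd \<circ> ((\<lambda>b. (x1, b)) \<circ> p) = p" by auto
  show ?thesis unfolding P push_obj_def using h o c by (simp add: pointed_prod_iff e1 e2)
qed

lemma hpt_const:
  assumes "diffeology X2 D2" "diffeology X1 D1" "x1 \<in> X1" "pointed_plot D2 x2 P"
  shows "pointed_plot D1 x1 (push_obj (\<lambda>_. x1) P)"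
proof -
  obtain n U p where P: "P = (n, U, p)" by (cases P) auto
  have h: "D2 n U p" "connected U" "origin \<in> U" "p origin = x2" using assms(4) by (auto simp: P pointed_plot_def)
  have o: "open_Rn n U" using diffeology_D[OF assms(1) h(1)] by blast
  have c: "D1 n U (\<lambda>_. x1)" by (rule diffeology_const[OF assms(2) o assms(3)])
  have e: "(\<lambda>_. x1) \<circ> p = (\<lambda>_. x1)" by auto
  show ?thesis unfolding P push_obj_def using h c by (simp add: pointed_plot_def e)
qed

lemma hpt_smooth:
  assumes "dsmooth X D Y E g" "pointed_plot D x P"
  shows "pointed_plot E (g x) (push_obj g P)"
  using assms by (cases P) (auto simp: pointed_plot_def push_obj_def dsmooth_def)

lemma hpt_map:
  assumes "dsmooth X1 D1 Y1 E1 f1" "dsmooth X2 D2 Y2 E2 f2" "pointed_plot (prod_diffeology D1 D2) (x1, x2) P"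
  shows "pointed_plot (prod_diffeology E1 E2) (f1 x1, f2 x2) (push_obj (map_prod f1 f2) P)"
proof -
  obtain n U p where P: "P = (n, U, p)" by (cases P) auto
  have h: "open_Rn n U" "D1 n U (fst \<circ> p)" "D2 n U (snd \<circ> p)" "connected U" "origin \<in> U" "p origin = (x1, x2)"
    using assms(3) by (auto simp: P pointed_prod_iff)
  have "E1 n U (f1 \<circ> (fst \<circ> p))" using assms(1) h(2) by (auto simp: dsmooth_def)
  moreover have "E2 n U (f2 \<circ> (snd \<circ> p))" using assms(2) h(3) by (auto simp: dsmooth_def)
  moreover have "fst \<circ> (map_prod f1 f2 \<circ> p) = f1 \<circ> (fst \<circ> p)" "snd \<circ> (map_prod f1 f2 \<circ> p) = f2 \<circ> (snd \<circ> p)"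
    by (auto simp: fun_eq_iff)
  ultimately show ?thesis unfolding P push_obj_def using h by (simp add: pointed_prod_iff)
qed

lemma Rn_sel: assumes "\<And>j. A j \<Longrightarrow> j < m" shows "sel A \<sigma> y \<in> Rn m"
proof -
  have "sel A \<sigma> y i = 0" if "m \<le> i" for i
  proof -
    have "\<not> A i" using assms[of i] that by auto
    then show ?thesis by (simp add: sel_apply)
  qed
  then show ?thesis by (simp add: Rn_def)
qed

lemma core:
  assumes d1: "diffeology X1 D1" and x1: "x1 \<in> X1" and d2: "diffeology X2 D2" and x2: "x2 \<in> X2"
    and pp: "pointed_plot (prod_diffeology D1 D2) (x1, x2) P" and v: "v \<in> Rn (fst P)"
  shows "sub (ins P v) (sadd (ins (push_obj (\<lambda>z. (fst z, x2)) P) v) (ins (push_obj (\<lambda>z. (x1, snd z)) P) v))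
           \<in> rel (prod_diffeology D1 D2) (x1, x2)"
proof -
  let ?D = "prod_diffeology D1 D2"
  obtain n U p where P: "P = (n, U, p)" by (cases P) auto
  have h: "open_Rn n U" "D1 n U (fst \<circ> p)" "D2 n U (snd \<circ> p)" "connected U" "origin \<in> U" "p origin = (x1, x2)"
    using pp by (auto simp: P pointed_prod_iff)
  have URn: "U \<subseteq> Rn n" using h(1) unfolding open_Rn_def by (rule openin_imp_subset)
  have vn: "v \<in> Rn n" using v by (simp add: P)
  define lo where "lo = sel (\<lambda>j. j < n) (\<lambda>j. j)"
  define hi where "hi = sel (\<lambda>j. j < n) (\<lambda>j. j + n)"
  define dg where "dg = sel (\<lambda>j. j < 2 * n) (\<lambda>j. if j < n then j else j - n)"
  define i1 where "i1 = sel (\<lambda>j. j < n) (\<lambda>j. j)"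
  define i2 where "i2 = sel (\<lambda>j. n \<le> j \<and> j < 2 * n) (\<lambda>j. j - n)"
  define W where "W = {z \<in> Rn (2 * n). lo z \<in> U \<and> hi z \<in> U}"
  define q where "q = (\<lambda>z. (fst (p (lo z)), snd (p (hi z))))"
  define Q where "Q = (2 * n, W, q)"
  have lo_Rn: "lo z \<in> Rn n" for z unfolding lo_def by (rule Rn_sel) simp
  have hi_Rn: "hi z \<in> Rn n" for z unfolding hi_def by (rule Rn_sel) simp
  have lo_id: "lo u = u" if "u \<in> Rn n" for u using that by (auto simp: lo_def sel_apply Rn_def fun_eq_iff)
  have lo_origin: "lo origin = origin" "hi origin = origin" by (auto simp: lo_def hi_def sel_apply fun_eq_iff)
  obtain Ob where Ob: "open Ob" "U = Rn n \<inter> Ob" using h(1) unfolding open_Rn_def openin_open by blast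
  have W_eq: "W = Rn (2 * n) \<inter> (lo -` Ob \<inter> hi -` Ob)"
    unfolding W_def Ob(2) using lo_Rn hi_Rn by auto
  have oW: "open_Rn (2 * n) W"
    unfolding open_Rn_def openin_open W_eq
    by (intro exI[of _ "lo -` Ob \<inter> hi -` Ob"] conjI open_Int open_vimage Ob(1))
       (auto simp: lo_def hi_def intro: continuous_sel)
  define g where "g = (\<lambda>(u::vec, w::vec). (\<lambda>j. if j < n then u j else if j < 2 * n then w (j - n) else 0) :: vec)"
  have gW: "g ` (U \<times> U) = W"
  proof
    show "g ` (U \<times> U) \<subseteq> W"
    proof (clarify)
      fix u w assume uw: "u \<in> U" "w \<in> U"
      then have "u \<in> Rn n" "w \<in> Rn n" using URn by auto
      then have "g (u, w) \<in> Rn (2 * n)" "lo (g (u, w)) = u" "hi (g (u, w)) = w"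
        by (auto simp: g_def Rn_def lo_def hi_def sel_apply fun_eq_iff)
      then show "g (u, w) \<in> W" using uw by (simp add: W_def)
    qed
    show "W \<subseteq> g ` (U \<times> U)"
    proof
      fix z assume z: "z \<in> W"
      have "z = g (lo z, hi z)"
        using z by (auto simp: W_def g_def Rn_def lo_def hi_def sel_apply fun_eq_iff)
      then show "z \<in> g ` (U \<times> U)" using z by (auto simp: W_def)
    qed
  qed
  have cg: "continuous_on (U \<times> U) g"
  proof (rule continuous_on_coordinatewise_then_product)
    fix j
    have c1: "continuous_on (U \<times> U) (\<lambda>z::vec\<times>vec. fst z k)" for k
      by (rule continuous_on_product_then_coordinatewise) (intro continuous_intros)
    have c2: "continuous_on (U \<times> U) (\<lambda>z::vec\<times>vec. snd z k)" for k
      by (rule continuous_on_product_then_coordinatewise) (intro continuous_intros)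
    have e: "(\<lambda>x. g x j) = (if j < n then (\<lambda>z. fst z j) else if j < 2 * n then (\<lambda>z. snd z (j - n)) else (\<lambda>z. 0))"
      by (auto simp: g_def fun_eq_iff)
    show "continuous_on (U \<times> U) (\<lambda>x. g x j)"
      unfolding e using c1 c2 by (auto intro: continuous_intros)
  qed
  have cW: "connected W"
    unfolding gW[symmetric] by (rule connected_continuous_image[OF cg]) (simp add: connected_Times h(4))
  have oW0: "origin \<in> W" using lo_origin h(5) by (simp add: W_def)
  have sm_lo: "smooth_map (2 * n) W n lo" unfolding lo_def by (rule smooth_sel) simp
  have sm_hi: "smooth_map (2 * n) W n hi" unfolding hi_def by (rule smooth_sel) simp
  have "D1 (2 * n) W ((fst \<circ> p) \<circ> lo)"
    by (rule diffeology_comp[OF d1 h(2) oW sm_lo]) (auto simp: W_def)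
  moreover have "D2 (2 * n) W ((snd \<circ> p) \<circ> hi)"
    by (rule diffeology_comp[OF d2 h(3) oW sm_hi]) (auto simp: W_def)
  moreover have "fst \<circ> q = (fst \<circ> p) \<circ> lo" "snd \<circ> q = (snd \<circ> p) \<circ> hi" by (auto simp: q_def)
  ultimately have pQ: "pointed_plot ?D (x1, x2) Q"
    unfolding Q_def using oW cW oW0 lo_origin h(6) by (simp add: pointed_prod_iff q_def)
  have pP1: "pointed_plot ?D (x1, x2) (push_obj (\<lambda>z. (fst z, x2)) P)"
    using hpt_J1[OF d1 d2 x2 hpt_fst[OF pp]] by (simp add: push_push comp_def)
  have pP2: "pointed_plot ?D (x1, x2) (push_obj (\<lambda>z. (x1, snd z)) P)"
    using hpt_J2[OF d1 d2 x1 hpt_snd[OF pp]] by (simp add: push_push comp_def)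
  have m0: "plot_morphism P Q dg"
    unfolding plot_morphism_def P Q_def
  proof (simp, intro conjI ballI)
    show "smooth_map n U (2 * n) dg" unfolding dg_def by (rule smooth_sel) simp
    show "dg origin = origin" by (auto simp: dg_def sel_apply fun_eq_iff)
    have *: "dg u \<in> Rn (2 * n) \<and> lo (dg u) = u \<and> hi (dg u) = u" if "u \<in> U" for u
      using that URn by (auto simp: dg_def lo_def hi_def Rn_def sel_apply fun_eq_iff)
    show "dg ` U \<subseteq> W" using * by (auto simp: W_def)
    fix u assume "u \<in> U"
    then show "q (dg u) = p u" using * by (simp add: q_def)
  qed
  have m1: "plot_morphism (push_obj (\<lambda>z. (fst z, x2)) P) Q i1"
    unfolding plot_morphism_def P Q_def push_obj_def
  proof (simp, intro conjI ballI)
    show "smooth_map n U (2 * n) i1" unfolding i1_def by (rule smooth_sel) simp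
    show "i1 origin = origin" by (auto simp: i1_def sel_apply fun_eq_iff)
    have *: "i1 u = u \<and> u \<in> Rn (2 * n) \<and> lo u = u \<and> hi u = origin" if "u \<in> U" for u
      using that URn by (auto simp: i1_def lo_def hi_def Rn_def sel_apply fun_eq_iff)
    show "i1 ` U \<subseteq> W" using * h(5) by (auto simp: W_def)
    fix u assume "u \<in> U"
    then show "q (i1 u) = (fst (p u), x2)" using * h(6) by (simp add: q_def)
  qed
  have m2: "plot_morphism (push_obj (\<lambda>z. (x1, snd z)) P) Q i2"
    unfolding plot_morphism_def P Q_def push_obj_def
  proof (simp, intro conjI ballI)
    show "smooth_map n U (2 * n) i2" unfolding i2_def by (rule smooth_sel) simp
    show "i2 origin = origin" by (auto simp: i2_def sel_apply fun_eq_iff)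
    have *: "i2 u \<in> Rn (2 * n) \<and> lo (i2 u) = origin \<and> hi (i2 u) = u" if "u \<in> U" for u
      using that URn by (auto simp: i2_def lo_def hi_def Rn_def sel_apply fun_eq_iff)
    show "i2 ` U \<subseteq> W" using * h(5) by (auto simp: W_def)
    fix u assume "u \<in> U"
    then show "q (i2 u) = (x1, snd (p u))" using * h(6) by (simp add: q_def)
  qed
  define J0 where "J0 = jac n (2 * n) dg v"
  define J1 where "J1 = jac n (2 * n) i1 v"
  define J2 where "J2 = jac n (2 * n) i2 v"
  have J: "J0 j = J1 j + J2 j" for j
    using vn by (auto simp: J0_def J1_def J2_def dg_def i1_def i2_def jac_sel Rn_def)
  have g0: "sub (ins P v) (ins Q J0) \<in> rel ?D (x1, x2)"
    using rel_gen[OF pp pQ m0 v] by (simp add: sub_def J0_def P Q_def)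
  have g1: "sub (ins (push_obj (\<lambda>z. (fst z, x2)) P) v) (ins Q J1) \<in> rel ?D (x1, x2)"
    using rel_gen[OF pP1 pQ m1] v by (simp add: sub_def J1_def P Q_def)
  have g2: "sub (ins (push_obj (\<lambda>z. (x1, snd z)) P) v) (ins Q J2) \<in> rel ?D (x1, x2)"
    using rel_gen[OF pP2 pQ m2] v by (simp add: sub_def J2_def P Q_def)
  have "sub (sub (sub (ins P v) (ins Q J0)) (sub (ins (push_obj (\<lambda>z. (fst z, x2)) P) v) (ins Q J1)))
          (sub (ins (push_obj (\<lambda>z. (x1, snd z)) P) v) (ins Q J2)) \<in> rel ?D (x1, x2)"
    by (rule rel_sub[OF rel_sub[OF g0 g1] g2])
  moreover have "sub (sub (sub (ins P v) (ins Q J0)) (sub (ins (push_obj (\<lambda>z. (fst z, x2)) P) v) (ins Q J1)))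
          (sub (ins (push_obj (\<lambda>z. (x1, snd z)) P) v) (ins Q J2))
       = sub (ins P v) (sadd (ins (push_obj (\<lambda>z. (fst z, x2)) P) v) (ins (push_obj (\<lambda>z. (x1, snd z)) P) v))"
    by (rule fun2_eqI) (simp add: ins_apply J)
  ultimately show ?thesis by simp
qed



lemma rel_const_push:
  assumes d2: "diffeology X2 D2" and x2: "x2 \<in> X2"
    and hc: "\<And>P. pointed_plot D1 x1 P \<Longrightarrow> pointed_plot D2 x2 (push_obj (\<lambda>_. x2) P)"
    and a: "\<phi> \<in> dsum D1 x1"
  shows "dpush (\<lambda>_. x2) \<phi> \<in> rel D2 x2"
proof (rule rel_const_all[OF d2 x2 dpush_dsum[OF hc a]])
  fix Q assume "dpush (\<lambda>_. x2) \<phi> Q \<noteq> origin"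
  moreover have "finite {P. \<phi> P \<noteq> origin}" using a by (simp add: dsum_def)
  ultimately have "Q \<in> push_obj (\<lambda>_. x2) ` {P. \<phi> P \<noteq> origin}" using dpush_supp by blast
  then obtain P where "P \<in> {P. \<phi> P \<noteq> origin}" "Q = push_obj (\<lambda>_. x2) P" by (rule imageE)
  then show "snd (snd Q) = (\<lambda>_. x2)" by (cases P) (auto simp: push_obj_def)
qed

lemma inv_rel:
  assumes d1: "diffeology X1 D1" and x1: "x1 \<in> X1" and d2: "diffeology X2 D2" and x2: "x2 \<in> X2"
    and a: "\<phi> \<in> dsum (prod_diffeology D1 D2) (x1, x2)"
  shows "sub \<phi> (sadd (dpush (\<lambda>z. (fst z, x2)) \<phi>) (dpush (\<lambda>z. (x1, snd z)) \<phi>)) \<in> rel (prod_diffeology D1 D2) (x1, x2)"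
  using a
proof (rule dsum_induct)
  have e: "sub (\<lambda>_. origin) (sadd (dpush (\<lambda>z. (fst z, x2)) (\<lambda>_. origin)) (dpush (\<lambda>z. (x1, snd z)) (\<lambda>_. origin))) = (\<lambda>_. origin)"
    unfolding dpush_zero by (rule fun2_eqI) simp
  show "sub (\<lambda>_. origin) (sadd (dpush (\<lambda>z. (fst z, x2)) (\<lambda>_. origin)) (dpush (\<lambda>z. (x1, snd z)) (\<lambda>_. origin))) \<in> rel (prod_diffeology D1 D2) (x1, x2)"
    unfolding e by (rule rel.rel_zero)
next
  fix \<psi> P v
  assume h: "\<psi> \<in> dsum (prod_diffeology D1 D2) (x1, x2)"
    "sub \<psi> (sadd (dpush (\<lambda>z. (fst z, x2)) \<psi>) (dpush (\<lambda>z. (x1, snd z)) \<psi>)) \<in> rel (prod_diffeology D1 D2) (x1, x2)"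
    "pointed_plot (prod_diffeology D1 D2) (x1, x2) P" "v \<in> Rn (fst P)"
  have c: "sub (ins P v) (sadd (ins (push_obj (\<lambda>z. (fst z, x2)) P) v) (ins (push_obj (\<lambda>z. (x1, snd z)) P) v))
           \<in> rel (prod_diffeology D1 D2) (x1, x2)"
    by (rule core[OF d1 x1 d2 x2 h(3,4)])
  have f: "finsupp \<psi>" by (rule dsum_finsupp[OF h(1)])
  have "sub (sadd (ins P v) \<psi>) (sadd (dpush (\<lambda>z. (fst z, x2)) (sadd (ins P v) \<psi>)) (dpush (\<lambda>z. (x1, snd z)) (sadd (ins P v) \<psi>)))
     = sadd (sub (ins P v) (sadd (ins (push_obj (\<lambda>z. (fst z, x2)) P) v) (ins (push_obj (\<lambda>z. (x1, snd z)) P) v)))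
            (sub \<psi> (sadd (dpush (\<lambda>z. (fst z, x2)) \<psi>) (dpush (\<lambda>z. (x1, snd z)) \<psi>)))"
    by (rule fun2_eqI) (simp add: dpush_sadd finsupp_ins f dpush_ins)
  then show "sub (sadd (ins P v) \<psi>) (sadd (dpush (\<lambda>z. (fst z, x2)) (sadd (ins P v) \<psi>)) (dpush (\<lambda>z. (x1, snd z)) (sadd (ins P v) \<psi>)))
     \<in> rel (prod_diffeology D1 D2) (x1, x2)"
    using rel_add[OF c h(2)] by simp
qed



theorem proposition3p7:
  fixes X1 :: "'a set" and D1 :: "nat \<Rightarrow> vec set \<Rightarrow> (vec \<Rightarrow> 'a) \<Rightarrow> bool" and x1 :: 'a
    and X2 :: "'b set" and D2 :: "nat \<Rightarrow> vec set \<Rightarrow> (vec \<Rightarrow> 'b) \<Rightarrow> bool" and x2 :: 'b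
  assumes "diffeology X1 D1" and "x1 \<in> X1"
    and "diffeology X2 D2" and "x2 \<in> X2"
  shows
    \<comment> \<open>the canonical map is a bijection ...\<close>
    "bij_betw (prod_cmp D1 x1 D2 x2) (tspace (prod_diffeology D1 D2) (x1, x2))
        (tspace D1 x1 \<times> tspace D2 x2)
    \<comment> \<open>... which is linear ...\<close>
   \<and> (\<forall>C\<in>tspace (prod_diffeology D1 D2) (x1, x2). \<forall>C'\<in>tspace (prod_diffeology D1 D2) (x1, x2).
        prod_cmp D1 x1 D2 x2 (tadd (prod_diffeology D1 D2) (x1, x2) C C')
        = (tadd D1 x1 (fst (prod_cmp D1 x1 D2 x2 C)) (fst (prod_cmp D1 x1 D2 x2 C')),
           tadd D2 x2 (snd (prod_cmp D1 x1 D2 x2 C)) (snd (prod_cmp D1 x1 D2 x2 C'))))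
   \<and> (\<forall>c. \<forall>C\<in>tspace (prod_diffeology D1 D2) (x1, x2).
        prod_cmp D1 x1 D2 x2 (tscale (prod_diffeology D1 D2) (x1, x2) c C)
        = (tscale D1 x1 c (fst (prod_cmp D1 x1 D2 x2 C)),
           tscale D2 x2 c (snd (prod_cmp D1 x1 D2 x2 C))))
    \<comment> \<open>... and natural in smooth pointed maps f1 : (X1,x1) -> (Y1,y1), f2 : (X2,x2) -> (Y2,y2)\<close>
   \<and> (\<forall>(Y1 :: 'c set) E1 y1 (f1 :: 'a \<Rightarrow> 'c) (Y2 :: 'd set) E2 y2 (f2 :: 'b \<Rightarrow> 'd).
        diffeology Y1 E1 \<and> diffeology Y2 E2 \<and> dsmooth X1 D1 Y1 E1 f1 \<and> dsmooth X2 D2 Y2 E2 f2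
        \<and> f1 x1 = y1 \<and> f2 x2 = y2 \<longrightarrow>
        (\<forall>C\<in>tspace (prod_diffeology D1 D2) (x1, x2).
           prod_cmp E1 y1 E2 y2 (tmap (prod_diffeology E1 E2) (y1, y2) (map_prod f1 f2) C)
           = (tmap E1 y1 f1 (fst (prod_cmp D1 x1 D2 x2 C)),
              tmap E2 y2 f2 (snd (prod_cmp D1 x1 D2 x2 C)))))"
proof -
  let ?D = "prod_diffeology D1 D2"
  let ?x = "(x1, x2)"
  note d1 = assms(1) and x1 = assms(2) and d2 = assms(3) and x2 = assms(4)
  have HF: "\<And>P. pointed_plot ?D ?x P \<Longrightarrow> pointed_plot D1 x1 (push_obj fst P)" by (rule hpt_fst)
  have HS: "\<And>P. pointed_plot ?D ?x P \<Longrightarrow> pointed_plot D2 x2 (push_obj snd P)" by (rule hpt_snd)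
  have HJ1: "\<And>P. pointed_plot D1 x1 P \<Longrightarrow> pointed_plot ?D ?x (push_obj (\<lambda>a. (a, x2)) P)"
    by (rule hpt_J1[OF d1 d2 x2])
  have HJ2: "\<And>P. pointed_plot D2 x2 P \<Longrightarrow> pointed_plot ?D ?x (push_obj (\<lambda>b. (x1, b)) P)"
    by (rule hpt_J2[OF d1 d2 x1])
  have HC1: "\<And>P. pointed_plot D2 x2 P \<Longrightarrow> pointed_plot D1 x1 (push_obj (\<lambda>_. x1) P)"
    by (rule hpt_const[OF d2 d1 x1])
  have HC2: "\<And>P. pointed_plot D1 x1 P \<Longrightarrow> pointed_plot D2 x2 (push_obj (\<lambda>_. x2) P)"
    by (rule hpt_const[OF d1 d2 x2])
  have Phi: "prod_cmp D1 x1 D2 x2 (cls ?D ?x \<phi>) = (cls D1 x1 (dpush fst \<phi>), cls D2 x2 (dpush snd \<phi>))"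
    if "\<phi> \<in> dsum ?D ?x" for \<phi>
    unfolding prod_cmp_def using tmap_cls[OF HF that] tmap_cls[OF HS that] by simp
  have dF: "dpush fst \<phi> \<in> dsum D1 x1" if "\<phi> \<in> dsum ?D ?x" for \<phi> by (rule dpush_dsum[OF HF that])
  have dS: "dpush snd \<phi> \<in> dsum D2 x2" if "\<phi> \<in> dsum ?D ?x" for \<phi> by (rule dpush_dsum[OF HS that])
  have tsp: "\<exists>\<phi>. \<phi> \<in> dsum ?D ?x \<and> C = cls ?D ?x \<phi>" if "C \<in> tspace ?D ?x" for C
    using that by (auto simp: tspace_def)
  have cJ1: "(\<lambda>z. (fst z, x2)) = (\<lambda>a. (a, x2)) \<circ> fst" by auto
  have cJ2: "(\<lambda>z. (x1, snd z)) = (\<lambda>b. (x1, b)) \<circ> snd" by auto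
  have inj: "inj_on (prod_cmp D1 x1 D2 x2) (tspace ?D ?x)"
  proof (rule inj_onI)
    fix C C' assume C: "C \<in> tspace ?D ?x" and C': "C' \<in> tspace ?D ?x"
      and eq: "prod_cmp D1 x1 D2 x2 C = prod_cmp D1 x1 D2 x2 C'"
    obtain \<phi> where \<phi>: "\<phi> \<in> dsum ?D ?x" "C = cls ?D ?x \<phi>" using tsp[OF C] by blast
    obtain \<phi>' where \<phi>': "\<phi>' \<in> dsum ?D ?x" "C' = cls ?D ?x \<phi>'" using tsp[OF C'] by blast
    have e1: "cls D1 x1 (dpush fst \<phi>) = cls D1 x1 (dpush fst \<phi>')"
      and e2: "cls D2 x2 (dpush snd \<phi>) = cls D2 x2 (dpush snd \<phi>')"
      using eq unfolding \<phi>(2) \<phi>'(2) Phi[OF \<phi>(1)] Phi[OF \<phi>'(1)] by simp_all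
    define \<delta> where "\<delta> = sub \<phi> \<phi>'"
    have d\<delta>: "\<delta> \<in> dsum ?D ?x" unfolding \<delta>_def by (rule dsum_sub[OF \<phi>(1) \<phi>'(1)])
    have f\<phi>: "finsupp \<phi>" "finsupp \<phi>'" using \<phi>(1) \<phi>'(1) by (simp_all add: dsum_finsupp)
    have r1: "dpush fst \<delta> \<in> rel D1 x1"
      using cls_eqD[OF dF[OF \<phi>(1)] dF[OF \<phi>'(1)] e1] by (simp add: \<delta>_def dpush_sub f\<phi>)
    have r2: "dpush snd \<delta> \<in> rel D2 x2"
      using cls_eqD[OF dS[OF \<phi>(1)] dS[OF \<phi>'(1)] e2] by (simp add: \<delta>_def dpush_sub f\<phi>)
    have fd: "finsupp \<delta>" by (rule dsum_finsupp[OF d\<delta>])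
    have a1: "dpush (\<lambda>z. (fst z, x2)) \<delta> \<in> rel ?D ?x"
      unfolding cJ1 dpush_comp[OF fd, symmetric] by (rule dpush_rel[OF HJ1 r1])
    have a2: "dpush (\<lambda>z. (x1, snd z)) \<delta> \<in> rel ?D ?x"
      unfolding cJ2 dpush_comp[OF fd, symmetric] by (rule dpush_rel[OF HJ2 r2])
    have "sadd (sub \<delta> (sadd (dpush (\<lambda>z. (fst z, x2)) \<delta>) (dpush (\<lambda>z. (x1, snd z)) \<delta>)))
              (sadd (dpush (\<lambda>z. (fst z, x2)) \<delta>) (dpush (\<lambda>z. (x1, snd z)) \<delta>)) \<in> rel ?D ?x"
      by (rule rel_add[OF inv_rel[OF d1 x1 d2 x2 d\<delta>] rel_add[OF a1 a2]])
    moreover have "sadd (sub \<delta> (sadd (dpush (\<lambda>z. (fst z, x2)) \<delta>) (dpush (\<lambda>z. (x1, snd z)) \<delta>)))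
              (sadd (dpush (\<lambda>z. (fst z, x2)) \<delta>) (dpush (\<lambda>z. (x1, snd z)) \<delta>)) = sub \<phi> \<phi>'"
      by (rule fun2_eqI) (simp add: \<delta>_def)
    ultimately have "sub \<phi> \<phi>' \<in> rel ?D ?x" by simp
    then show "C = C'" unfolding \<phi>(2) \<phi>'(2) by (rule cls_eqI[OF \<phi>(1) \<phi>'(1)])
  qed
  have img: "prod_cmp D1 x1 D2 x2 ` tspace ?D ?x = tspace D1 x1 \<times> tspace D2 x2"
  proof
    show "prod_cmp D1 x1 D2 x2 ` tspace ?D ?x \<subseteq> tspace D1 x1 \<times> tspace D2 x2"
    proof
      fix Y assume "Y \<in> prod_cmp D1 x1 D2 x2 ` tspace ?D ?x"
      then obtain C where C: "C \<in> tspace ?D ?x" "Y = prod_cmp D1 x1 D2 x2 C" by blast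
      obtain \<phi> where \<phi>: "\<phi> \<in> dsum ?D ?x" "C = cls ?D ?x \<phi>" using tsp[OF C(1)] by blast
      show "Y \<in> tspace D1 x1 \<times> tspace D2 x2"
        unfolding C(2) \<phi>(2) Phi[OF \<phi>(1)] tspace_def using dF[OF \<phi>(1)] dS[OF \<phi>(1)] by blast
    qed
    show "tspace D1 x1 \<times> tspace D2 x2 \<subseteq> prod_cmp D1 x1 D2 x2 ` tspace ?D ?x"
    proof
      fix Y assume "Y \<in> tspace D1 x1 \<times> tspace D2 x2"
      then obtain \<phi>1 \<phi>2 where p1: "\<phi>1 \<in> dsum D1 x1" and p2: "\<phi>2 \<in> dsum D2 x2"
        and Y: "Y = (cls D1 x1 \<phi>1, cls D2 x2 \<phi>2)" by (auto simp: tspace_def)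
      define \<phi> where "\<phi> = sadd (dpush (\<lambda>a. (a, x2)) \<phi>1) (dpush (\<lambda>b. (x1, b)) \<phi>2)"
      have d: "\<phi> \<in> dsum ?D ?x" unfolding \<phi>_def
        by (rule dsum_add[OF dpush_dsum[OF HJ1 p1] dpush_dsum[OF HJ2 p2]])
      have f1: "finsupp \<phi>1" "finsupp \<phi>2" using p1 p2 by (simp_all add: dsum_finsupp)
      have id1: "fst \<circ> (\<lambda>a. (a, x2)) = (\<lambda>a. a)" "fst \<circ> (\<lambda>b. (x1, b)) = (\<lambda>_. x1)"
        "snd \<circ> (\<lambda>a. (a, x2)) = (\<lambda>_. x2)" "snd \<circ> (\<lambda>b. (x1, b)) = (\<lambda>a. a)" by auto
      have q1: "dpush fst \<phi> = sadd \<phi>1 (dpush (\<lambda>_. x1) \<phi>2)"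
        unfolding \<phi>_def by (simp add: dpush_sadd finsupp_dpush f1 dpush_comp id1 dpush_id)
      have q2: "dpush snd \<phi> = sadd (dpush (\<lambda>_. x2) \<phi>1) \<phi>2"
        unfolding \<phi>_def by (simp add: dpush_sadd finsupp_dpush f1 dpush_comp id1 dpush_id)
      have c1: "dpush (\<lambda>_. x1) \<phi>2 \<in> rel D1 x1" by (rule rel_const_push[OF d1 x1 HC1 p2])
      have c2: "dpush (\<lambda>_. x2) \<phi>1 \<in> rel D2 x2" by (rule rel_const_push[OF d2 x2 HC2 p1])
      have k1: "cls D1 x1 (dpush fst \<phi>) = cls D1 x1 \<phi>1"
      proof (rule cls_eqI[OF dF[OF d] p1])
        have "sub (dpush fst \<phi>) \<phi>1 = dpush (\<lambda>_. x1) \<phi>2" unfolding q1 by (rule fun2_eqI) simp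
        then show "sub (dpush fst \<phi>) \<phi>1 \<in> rel D1 x1" using c1 by simp
      qed
      have k2: "cls D2 x2 (dpush snd \<phi>) = cls D2 x2 \<phi>2"
      proof (rule cls_eqI[OF dS[OF d] p2])
        have "sub (dpush snd \<phi>) \<phi>2 = dpush (\<lambda>_. x2) \<phi>1" unfolding q2 by (rule fun2_eqI) simp
        then show "sub (dpush snd \<phi>) \<phi>2 \<in> rel D2 x2" using c2 by simp
      qed
      have "Y = prod_cmp D1 x1 D2 x2 (cls ?D ?x \<phi>)" unfolding Y Phi[OF d] k1 k2 ..
      moreover have "cls ?D ?x \<phi> \<in> tspace ?D ?x" using d by (simp add: tspace_def)
      ultimately show "Y \<in> prod_cmp D1 x1 D2 x2 ` tspace ?D ?x" by blast
    qed
  qed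
  have part1: "bij_betw (prod_cmp D1 x1 D2 x2) (tspace ?D ?x) (tspace D1 x1 \<times> tspace D2 x2)"
    unfolding bij_betw_def using inj img by blast
  have part2: "\<forall>C\<in>tspace ?D ?x. \<forall>C'\<in>tspace ?D ?x.
        prod_cmp D1 x1 D2 x2 (tadd ?D ?x C C')
        = (tadd D1 x1 (fst (prod_cmp D1 x1 D2 x2 C)) (fst (prod_cmp D1 x1 D2 x2 C')),
           tadd D2 x2 (snd (prod_cmp D1 x1 D2 x2 C)) (snd (prod_cmp D1 x1 D2 x2 C')))"
  proof (intro ballI)
    fix C C' assume C: "C \<in> tspace ?D ?x" and C': "C' \<in> tspace ?D ?x"
    obtain \<phi> where \<phi>: "\<phi> \<in> dsum ?D ?x" "C = cls ?D ?x \<phi>" using tsp[OF C] by blast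
    obtain \<phi>' where \<phi>': "\<phi>' \<in> dsum ?D ?x" "C' = cls ?D ?x \<phi>'" using tsp[OF C'] by blast
    have f\<phi>: "finsupp \<phi>" "finsupp \<phi>'" using \<phi>(1) \<phi>'(1) by (simp_all add: dsum_finsupp)
    show "prod_cmp D1 x1 D2 x2 (tadd ?D ?x C C')
        = (tadd D1 x1 (fst (prod_cmp D1 x1 D2 x2 C)) (fst (prod_cmp D1 x1 D2 x2 C')),
           tadd D2 x2 (snd (prod_cmp D1 x1 D2 x2 C)) (snd (prod_cmp D1 x1 D2 x2 C')))"
      unfolding \<phi>(2) \<phi>'(2) tadd_cls[OF \<phi>(1) \<phi>'(1)] Phi[OF \<phi>(1)] Phi[OF \<phi>'(1)]
        Phi[OF dsum_add[OF \<phi>(1) \<phi>'(1)]] fst_conv snd_conv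
        tadd_cls[OF dF[OF \<phi>(1)] dF[OF \<phi>'(1)]] tadd_cls[OF dS[OF \<phi>(1)] dS[OF \<phi>'(1)]]
      by (simp add: dpush_sadd f\<phi>)
  qed
  have part3: "\<forall>c. \<forall>C\<in>tspace ?D ?x.
        prod_cmp D1 x1 D2 x2 (tscale ?D ?x c C)
        = (tscale D1 x1 c (fst (prod_cmp D1 x1 D2 x2 C)),
           tscale D2 x2 c (snd (prod_cmp D1 x1 D2 x2 C)))"
  proof (intro allI ballI)
    fix c C assume C: "C \<in> tspace ?D ?x"
    obtain \<phi> where \<phi>: "\<phi> \<in> dsum ?D ?x" "C = cls ?D ?x \<phi>" using tsp[OF C] by blast
    have f\<phi>: "finsupp \<phi>" using \<phi>(1) by (simp add: dsum_finsupp)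
    show "prod_cmp D1 x1 D2 x2 (tscale ?D ?x c C)
        = (tscale D1 x1 c (fst (prod_cmp D1 x1 D2 x2 C)),
           tscale D2 x2 c (snd (prod_cmp D1 x1 D2 x2 C)))"
      unfolding \<phi>(2) tscale_cls[OF \<phi>(1)] Phi[OF \<phi>(1)] Phi[OF dsum_scale[OF \<phi>(1)]] fst_conv snd_conv
        tscale_cls[OF dF[OF \<phi>(1)]] tscale_cls[OF dS[OF \<phi>(1)]]
      by (simp add: dpush_sscale f\<phi>)
  qed
  have part4: "\<forall>(Y1 :: 'c set) E1 y1 (f1 :: 'a \<Rightarrow> 'c) (Y2 :: 'd set) E2 y2 (f2 :: 'b \<Rightarrow> 'd).
        diffeology Y1 E1 \<and> diffeology Y2 E2 \<and> dsmooth X1 D1 Y1 E1 f1 \<and> dsmooth X2 D2 Y2 E2 f2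
        \<and> f1 x1 = y1 \<and> f2 x2 = y2 \<longrightarrow>
        (\<forall>C\<in>tspace ?D ?x.
           prod_cmp E1 y1 E2 y2 (tmap (prod_diffeology E1 E2) (y1, y2) (map_prod f1 f2) C)
           = (tmap E1 y1 f1 (fst (prod_cmp D1 x1 D2 x2 C)),
              tmap E2 y2 f2 (snd (prod_cmp D1 x1 D2 x2 C))))"
  proof (intro allI impI ballI)
    fix Y1 :: "'c set" and E1 y1 and f1 :: "'a \<Rightarrow> 'c" and Y2 :: "'d set" and E2 y2 and f2 :: "'b \<Rightarrow> 'd" and C
    assume hyp: "diffeology Y1 E1 \<and> diffeology Y2 E2 \<and> dsmooth X1 D1 Y1 E1 f1 \<and> dsmooth X2 D2 Y2 E2 f2
        \<and> f1 x1 = y1 \<and> f2 x2 = y2" and C: "C \<in> tspace ?D ?x"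
    have s1: "dsmooth X1 D1 Y1 E1 f1" and s2: "dsmooth X2 D2 Y2 E2 f2" and y1: "f1 x1 = y1" and y2: "f2 x2 = y2"
      using hyp by blast+
    obtain \<phi> where \<phi>: "\<phi> \<in> dsum ?D ?x" "C = cls ?D ?x \<phi>" using tsp[OF C] by blast
    have f\<phi>: "finsupp \<phi>" using \<phi>(1) by (simp add: dsum_finsupp)
    have HM: "\<And>P. pointed_plot ?D ?x P \<Longrightarrow> pointed_plot (prod_diffeology E1 E2) (y1, y2) (push_obj (map_prod f1 f2) P)"
      unfolding y1[symmetric] y2[symmetric] by (rule hpt_map[OF s1 s2])
    have H1: "\<And>P. pointed_plot D1 x1 P \<Longrightarrow> pointed_plot E1 y1 (push_obj f1 P)"
      unfolding y1[symmetric] by (rule hpt_smooth[OF s1])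
    have H2: "\<And>P. pointed_plot D2 x2 P \<Longrightarrow> pointed_plot E2 y2 (push_obj f2 P)"
      unfolding y2[symmetric] by (rule hpt_smooth[OF s2])
    have HEF: "\<And>P. pointed_plot (prod_diffeology E1 E2) (y1, y2) P \<Longrightarrow> pointed_plot E1 y1 (push_obj fst P)"
      by (rule hpt_fst)
    have HES: "\<And>P. pointed_plot (prod_diffeology E1 E2) (y1, y2) P \<Longrightarrow> pointed_plot E2 y2 (push_obj snd P)"
      by (rule hpt_snd)
    have dM: "dpush (map_prod f1 f2) \<phi> \<in> dsum (prod_diffeology E1 E2) (y1, y2)" by (rule dpush_dsum[OF HM \<phi>(1)])
    have cc: "fst \<circ> map_prod f1 f2 = f1 \<circ> fst" "snd \<circ> map_prod f1 f2 = f2 \<circ> snd" by auto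
    show "prod_cmp E1 y1 E2 y2 (tmap (prod_diffeology E1 E2) (y1, y2) (map_prod f1 f2) C)
           = (tmap E1 y1 f1 (fst (prod_cmp D1 x1 D2 x2 C)),
              tmap E2 y2 f2 (snd (prod_cmp D1 x1 D2 x2 C)))"
    proof -
      have e1: "tmap (prod_diffeology E1 E2) (y1, y2) (map_prod f1 f2) (cls ?D ?x \<phi>)
          = cls (prod_diffeology E1 E2) (y1, y2) (dpush (map_prod f1 f2) \<phi>)" by (rule tmap_cls[OF HM \<phi>(1)])
      have e2: "prod_cmp E1 y1 E2 y2 (cls (prod_diffeology E1 E2) (y1, y2) (dpush (map_prod f1 f2) \<phi>))
          = (cls E1 y1 (dpush fst (dpush (map_prod f1 f2) \<phi>)), cls E2 y2 (dpush snd (dpush (map_prod f1 f2) \<phi>)))"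
        unfolding prod_cmp_def using tmap_cls[OF HEF dM] tmap_cls[OF HES dM] by simp
      have e3: "tmap E1 y1 f1 (cls D1 x1 (dpush fst \<phi>)) = cls E1 y1 (dpush f1 (dpush fst \<phi>))"
        by (rule tmap_cls[OF H1 dF[OF \<phi>(1)]])
      have e4: "tmap E2 y2 f2 (cls D2 x2 (dpush snd \<phi>)) = cls E2 y2 (dpush f2 (dpush snd \<phi>))"
        by (rule tmap_cls[OF H2 dS[OF \<phi>(1)]])
      show ?thesis unfolding \<phi>(2) e1 e2 Phi[OF \<phi>(1)] fst_conv snd_conv e3 e4
        by (simp add: dpush_comp f\<phi> cc)
    qed
  qed
  show ?thesis using part1 part2 part3 part4 by blast
qed

end
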